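(* Let $v\in V\cap C^\infty(\overline D;\mathbb R^2)$. For each $s=L/N$ and $n=0,\dots,N-1$ let $v_n(\hat x)=v(\hat x,ns)$, and decompose $v_n=v_{n,1}+v_{n,2}$ with $v_{n,1}\in\mathscr F$, $v_{n,2}\in\mathscr G$. Set $v_1^s=\sum_{n=0}^{N-1}v_{n,1}\chi_n$ and $v_2^s=\sum_{n=0}^{N-1}v_{n,2}\chi_n$. Then there exist $v_1,v_2\in L^2(D;\mathbb R^2)$ such that $v_1+v_2=v$, $v_1^s\to v_1$ and $v_2^s\to v_2$ in $L^2(D;\mathbb R^2)$ as $s\to0$, and $$\langle v_1,v_2\rangle=\langle v_1^s,v_2\rangle=\langle v_1,v_2^s\rangle=0$$ for all $s$, where $\langle\cdot,\cdot\rangle$ is the inner product of $L^2(D;\mathbb R^2)$.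
   Context: Let $\Omega\subset\mathbb R^2$ be a bounded simply connected smooth domain, $L>0$, $D=\Omega\times(0,L)$, $s=L/N$ with $N$ a positive integer; $s\to0$ means $N\to\infty$. Points are $x=(\hat x,x_3)$. $\operatorname{curl}f=\partial_1f^2-\partial_2f^1$; $V:=\{v\in L^2(D;\mathbb R^2):\operatorname{curl}v\text{ is a finite Radon measure on }D\}$. $L^2(\Omega;\mathbb R^2)=\mathscr F\oplus\mathscr G$ (orthogonal direct sum), where $\mathscr F=\{(\partial_2f,-\partial_1f):f\in H^1(\Omega),\ f=0\text{ on }\partial\Omega\}$ and $\mathscr G=\{\hat\nabla g:g\in H^1(\Omega)\}$. $\chi_0=\chi_{(0,s)}(x_3)$ and $\chi_n=\chi_{[ns,(n+1)s)}(x_3)$ for $1\le n\le N-1$. *)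

theory Defs
  imports "HOL-Analysis.Analysis"
begin

text \<open>Points of R^2 are of type real^2; points of R^3 = R^2 x R are pairs (hat x, x3).\<close>

fun Ck_on :: "nat \<Rightarrow> 'a::euclidean_space set \<Rightarrow> ('a \<Rightarrow> 'b::real_normed_vector) \<Rightarrow> bool" where
  "Ck_on 0 S f = continuous_on S f"
| "Ck_on (Suc k) S f =
     (\<exists>f'. (\<forall>x\<in>S. (f has_derivative f' x) (at x)) \<and> (\<forall>i\<in>Basis. Ck_on k S (\<lambda>x. f' x i)))"

definition smooth_on :: "'a::euclidean_space set \<Rightarrow> ('a \<Rightarrow> 'b::real_normed_vector) \<Rightarrow> bool" where
  "smooth_on S f \<longleftrightarrow> open S \<and> (\<forall>k. Ck_on k S f)"

definition smooth_on_closure :: "'a::euclidean_space set \<Rightarrow> ('a \<Rightarrow> 'b::real_normed_vector) \<Rightarrow> bool" where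
  "smooth_on_closure S f \<longleftrightarrow>
     (\<exists>U w. open U \<and> closure S \<subseteq> U \<and> smooth_on U w \<and> (\<forall>x\<in>closure S. w x = f x))"

definition pder :: "('a::real_normed_vector \<Rightarrow> 'b::real_normed_vector) \<Rightarrow> 'a \<Rightarrow> 'a \<Rightarrow> 'b" where
  "pder f h x = frechet_derivative f (at x) h"

definition tsupport :: "('a::real_normed_vector \<Rightarrow> 'b::zero) \<Rightarrow> 'a set" where
  "tsupport f = closure {x. f x \<noteq> 0}"

definition test_fun :: "'a::euclidean_space set \<Rightarrow> ('a \<Rightarrow> real) \<Rightarrow> bool" where
  "test_fun U \<phi> \<longleftrightarrow> smooth_on UNIV \<phi> \<and> compact (tsupport \<phi>) \<and> tsupport \<phi> \<subseteq> U"

definition smooth_bounded_domain :: "(real^2) set \<Rightarrow> bool" where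
  "smooth_bounded_domain \<Omega> \<longleftrightarrow> open \<Omega> \<and> connected \<Omega> \<and> \<Omega> \<noteq> {} \<and> bounded \<Omega> \<and>
     (\<forall>p\<in>frontier \<Omega>. \<exists>r>0. \<exists>\<psi>::real^2 \<Rightarrow> real. smooth_on UNIV \<psi> \<and>
        (\<forall>x\<in>ball p r. frechet_derivative \<psi> (at x) \<noteq> (\<lambda>h. 0)) \<and>
        \<Omega> \<inter> ball p r = {x\<in>ball p r. \<psi> x < 0})"

definition cyl :: "(real^2) set \<Rightarrow> real \<Rightarrow> ((real^2) \<times> real) set" where
  "cyl \<Omega> L = \<Omega> \<times> {0<..<L}"

definition L2 :: "'a::euclidean_space set \<Rightarrow> ('a \<Rightarrow> 'b::euclidean_space) \<Rightarrow> bool" where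
  "L2 S f \<longleftrightarrow> set_borel_measurable lborel S f \<and> set_integrable lborel S (\<lambda>x. (norm (f x))\<^sup>2)"

definition L2_inner :: "'a::euclidean_space set \<Rightarrow> ('a \<Rightarrow> 'b::euclidean_space) \<Rightarrow> ('a \<Rightarrow> 'b) \<Rightarrow> real" where
  "L2_inner S f g = (LINT x:S|lborel. f x \<bullet> g x)"

definition L2_dist_sq :: "'a::euclidean_space set \<Rightarrow> ('a \<Rightarrow> 'b::euclidean_space) \<Rightarrow> ('a \<Rightarrow> 'b) \<Rightarrow> real" where
  "L2_dist_sq S f g = (LINT x:S|lborel. (norm (f x - g x))\<^sup>2)"

text \<open>Distributional curl (in the hat x variables) of v on D is a finite (signed) Radon
  measure: difference of two finite Borel measures concentrated on D.\<close>
definition curl_finite_radon :: "((real^2) \<times> real) set \<Rightarrow> ((real^2) \<times> real \<Rightarrow> real^2) \<Rightarrow> bool" where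
  "curl_finite_radon D v \<longleftrightarrow>
     (\<exists>\<mu> \<nu> :: ((real^2) \<times> real) measure.
        sets \<mu> = sets borel \<and> sets \<nu> = sets borel \<and> finite_measure \<mu> \<and> finite_measure \<nu> \<and>
        emeasure \<mu> (UNIV - D) = 0 \<and> emeasure \<nu> (UNIV - D) = 0 \<and>
        (\<forall>\<phi>. test_fun D \<phi> \<longrightarrow>
           (LINT x:D|lborel. v x $ 1 * pder \<phi> (axis 2 1, 0) x - v x $ 2 * pder \<phi> (axis 1 1, 0) x)
           = (\<integral>x. \<phi> x \<partial>\<mu>) - (\<integral>x. \<phi> x \<partial>\<nu>)))"

definition Vspace :: "((real^2) \<times> real) set \<Rightarrow> ((real^2) \<times> real \<Rightarrow> real^2) set" where
  "Vspace D = {v. L2 D v \<and> curl_finite_radon D v}"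

definition grad :: "(real^2 \<Rightarrow> real) \<Rightarrow> real^2 \<Rightarrow> real^2" where
  "grad \<phi> x = (\<chi> i. pder \<phi> (axis i 1) x)"

definition weak_grad :: "(real^2) set \<Rightarrow> (real^2 \<Rightarrow> real) \<Rightarrow> (real^2 \<Rightarrow> real^2) \<Rightarrow> bool" where
  "weak_grad \<Omega> g w \<longleftrightarrow> L2 \<Omega> g \<and> L2 \<Omega> w \<and>
     (\<forall>\<phi>. test_fun \<Omega> \<phi> \<longrightarrow> (\<forall>i. (LINT x:\<Omega>|lborel. g x * pder \<phi> (axis i 1) x)
                                     = - (LINT x:\<Omega>|lborel. w x $ i * \<phi> x)))"

definition H10 :: "(real^2) set \<Rightarrow> (real^2 \<Rightarrow> real) \<Rightarrow> (real^2 \<Rightarrow> real^2) \<Rightarrow> bool" where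
  "H10 \<Omega> f w \<longleftrightarrow> weak_grad \<Omega> f w \<and>
     (\<exists>\<phi>s. (\<forall>k. test_fun \<Omega> (\<phi>s k)) \<and>
        (\<lambda>k. L2_dist_sq \<Omega> (\<phi>s k) f + L2_dist_sq \<Omega> (grad (\<phi>s k)) w) \<longlonglongrightarrow> 0)"

definition rot_perp :: "real^2 \<Rightarrow> real^2" where
  "rot_perp w = (\<chi> i. if i = 1 then w $ 2 else - (w $ 1))"

definition Fspace :: "(real^2) set \<Rightarrow> (real^2 \<Rightarrow> real^2) set" where
  "Fspace \<Omega> = {u. L2 \<Omega> u \<and> (\<exists>f w. H10 \<Omega> f w \<and> (AE x in lborel. x \<in> \<Omega> \<longrightarrow> u x = rot_perp (w x)))}"

definition Gspace :: "(real^2) set \<Rightarrow> (real^2 \<Rightarrow> real^2) set" where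
  "Gspace \<Omega> = {u. L2 \<Omega> u \<and> (\<exists>g. weak_grad \<Omega> g u)}"

definition layer_chi :: "real \<Rightarrow> nat \<Rightarrow> nat \<Rightarrow> real \<Rightarrow> real" where
  "layer_chi L N n t = (let s = L / real N in
      if n = 0 then indicator {0<..<s} t else indicator {real n * s..<(real n + 1) * s} t)"

definition step_fun :: "real \<Rightarrow> nat \<Rightarrow> (nat \<Rightarrow> real^2 \<Rightarrow> real^2) \<Rightarrow> (real^2) \<times> real \<Rightarrow> real^2" where
  "step_fun L N u x = (\<Sum>n<N. layer_chi L N n (snd x) *\<^sub>R u n (fst x))"

end

theory Submission
  imports Defs
begin


lemma schwarz_half:
  fixes \<phi> :: "'a::real_normed_vector \<Rightarrow> real"
  assumes D: "\<And>x. (\<phi> has_derivative D x) (at x)"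
    and Eu: "\<And>x. ((\<lambda>y. D y u) has_derivative Eu x) (at x)"
    and h: "h > 0"
  shows "\<exists>p. norm (p - x) \<le> h * (norm u + norm w) \<and>
     \<phi> (x + h *\<^sub>R u + h *\<^sub>R w) - \<phi> (x + h *\<^sub>R u) - \<phi> (x + h *\<^sub>R w) + \<phi> x = h * h * Eu p w"
proof -
  define g where "g t = \<phi> (x + t *\<^sub>R u + h *\<^sub>R w) - \<phi> (x + t *\<^sub>R u)" for t
  have lin: "linear (D y)" for y using D has_derivative_linear by blast
  have gd: "(g has_derivative (\<lambda>d. d * (D (x + t *\<^sub>R u + h *\<^sub>R w) u - D (x + t *\<^sub>R u) u))) (at t within {0..h})" for t
  proof -
    have l1: "((\<lambda>t. x + t *\<^sub>R u + h *\<^sub>R w) has_derivative (\<lambda>d. d *\<^sub>R u)) (at t within {0..h})"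
      by (auto intro!: derivative_eq_intros)
    have l2: "((\<lambda>t. x + t *\<^sub>R u) has_derivative (\<lambda>d. d *\<^sub>R u)) (at t within {0..h})"
      by (auto intro!: derivative_eq_intros)
    have c1: "((\<lambda>t. \<phi> (x + t *\<^sub>R u + h *\<^sub>R w)) has_derivative (\<lambda>d. D (x + t *\<^sub>R u + h *\<^sub>R w) (d *\<^sub>R u))) (at t within {0..h})"
      using has_derivative_in_compose[OF l1 has_derivative_at_withinI[OF D]] by (simp add: o_def)
    have c2: "((\<lambda>t. \<phi> (x + t *\<^sub>R u)) has_derivative (\<lambda>d. D (x + t *\<^sub>R u) (d *\<^sub>R u))) (at t within {0..h})"
      using has_derivative_in_compose[OF l2 has_derivative_at_withinI[OF D]] by (simp add: o_def)
    have "(g has_derivative (\<lambda>d. D (x + t *\<^sub>R u + h *\<^sub>R w) (d *\<^sub>R u) - D (x + t *\<^sub>R u) (d *\<^sub>R u))) (at t within {0..h})"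
      unfolding g_def by (rule has_derivative_diff[OF c1 c2])
    moreover have "(\<lambda>d. D (x + t *\<^sub>R u + h *\<^sub>R w) (d *\<^sub>R u) - D (x + t *\<^sub>R u) (d *\<^sub>R u))
        = (\<lambda>d. d * (D (x + t *\<^sub>R u + h *\<^sub>R w) u - D (x + t *\<^sub>R u) u))"
      by (auto simp: linear_scale[OF lin] algebra_simps)
    ultimately show ?thesis by simp
  qed
  obtain \<xi> where \<xi>: "\<xi> \<in> {0..h}" and gxi: "g h - g 0 = (\<lambda>d. d * (D (x + \<xi> *\<^sub>R u + h *\<^sub>R w) u - D (x + \<xi> *\<^sub>R u) u)) (h - 0)"
    using mvt_very_simple[of 0 h g, OF _ gd] h by force
  define k where "k s = D (x + \<xi> *\<^sub>R u + s *\<^sub>R w) u" for s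
  have kd: "(k has_derivative (\<lambda>d. d * Eu (x + \<xi> *\<^sub>R u + s *\<^sub>R w) w)) (at s within {0..h})" for s
  proof -
    have l1: "((\<lambda>s. x + \<xi> *\<^sub>R u + s *\<^sub>R w) has_derivative (\<lambda>d. d *\<^sub>R w)) (at s within {0..h})"
      by (auto intro!: derivative_eq_intros)
    have "(k has_derivative (\<lambda>d. Eu (x + \<xi> *\<^sub>R u + s *\<^sub>R w) (d *\<^sub>R w))) (at s within {0..h})"
      unfolding k_def using has_derivative_in_compose[OF l1 has_derivative_at_withinI[OF Eu]] by (simp add: o_def)
    moreover have "linear (Eu y)" for y by (rule has_derivative_linear[OF Eu])
    ultimately show ?thesis by (simp add: linear_scale)
  qed
  obtain \<eta> where \<eta>: "\<eta> \<in> {0..h}" and keta: "k h - k 0 = (\<lambda>d. d * Eu (x + \<xi> *\<^sub>R u + \<eta> *\<^sub>R w) w) (h - 0)"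
    using mvt_very_simple[of 0 h k, OF _ kd] h by force
  define p where "p = x + \<xi> *\<^sub>R u + \<eta> *\<^sub>R w"
  have "norm (p - x) \<le> norm (\<xi> *\<^sub>R u) + norm (\<eta> *\<^sub>R w)" unfolding p_def
    using norm_triangle_ineq[of "\<xi> *\<^sub>R u" "\<eta> *\<^sub>R w"] by (simp add: algebra_simps)
  also have "\<dots> \<le> h * norm u + h * norm w" using \<xi> \<eta>
    by (intro add_mono) (auto intro!: mult_right_mono)
  finally have pn: "norm (p - x) \<le> h * (norm u + norm w)" by (simp add: algebra_simps)
  have "\<phi> (x + h *\<^sub>R u + h *\<^sub>R w) - \<phi> (x + h *\<^sub>R u) - \<phi> (x + h *\<^sub>R w) + \<phi> x = g h - g 0"
    by (simp add: g_def)
  also have "\<dots> = h * (k h - k 0)" using gxi by (simp add: k_def)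
  also have "\<dots> = h * h * Eu p w" using keta by (simp add: p_def)
  finally show ?thesis using pn by blast
qed

lemma schwarz:
  fixes \<phi> :: "'a::real_normed_vector \<Rightarrow> real"
  assumes D: "\<And>x. (\<phi> has_derivative D x) (at x)"
    and Eu: "\<And>x. ((\<lambda>y. D y u) has_derivative Eu x) (at x)"
    and Ew: "\<And>x. ((\<lambda>y. D y w) has_derivative Ew x) (at x)"
    and cu: "continuous_on UNIV (\<lambda>x. Eu x w)" and cw: "continuous_on UNIV (\<lambda>x. Ew x u)"
  shows "Eu x w = Ew x u"
proof (rule ccontr)
  assume ne: "Eu x w \<noteq> Ew x u"
  define e where "e = \<bar>Eu x w - Ew x u\<bar> / 2"
  have e: "e > 0" using ne by (simp add: e_def)
  obtain d1 where d1: "d1 > 0" "\<And>y. dist y x < d1 \<Longrightarrow> dist (Eu y w) (Eu x w) < e"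
    using cu e unfolding continuous_on_iff by (metis UNIV_I)
  obtain d2 where d2: "d2 > 0" "\<And>y. dist y x < d2 \<Longrightarrow> dist (Ew y u) (Ew x u) < e"
    using cw e unfolding continuous_on_iff by (metis UNIV_I)
  define h where "h = min d1 d2 / (2 * (norm u + norm w + 1))"
  have pos: "norm u + norm w + 1 > 0" by (smt (verit) norm_ge_zero)
  hence h: "h > 0" using d1 d2 unfolding h_def by (intro divide_pos_pos) auto
  have hb: "h * (norm u + norm w) < min d1 d2"
  proof -
    have "h * (norm u + norm w) < h * (norm u + norm w + 1)" using h by simp
    also have "\<dots> = min d1 d2 / 2" unfolding h_def
      using pos by (simp add: field_simps)
    also have "\<dots> < min d1 d2" using d1 d2 by (simp add: min_def)
    finally show ?thesis .
  qed
  obtain p where p: "norm (p - x) \<le> h * (norm u + norm w)"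
    "\<phi> (x + h *\<^sub>R u + h *\<^sub>R w) - \<phi> (x + h *\<^sub>R u) - \<phi> (x + h *\<^sub>R w) + \<phi> x = h * h * Eu p w"
    using schwarz_half[OF D Eu h] by blast
  obtain q where q: "norm (q - x) \<le> h * (norm w + norm u)"
    "\<phi> (x + h *\<^sub>R w + h *\<^sub>R u) - \<phi> (x + h *\<^sub>R w) - \<phi> (x + h *\<^sub>R u) + \<phi> x = h * h * Ew q u"
    using schwarz_half[OF D Ew h] by blast
  have "h * h * Eu p w = h * h * Ew q u" using p(2) q(2) by (simp add: algebra_simps)
  hence pq: "Eu p w = Ew q u" using h by simp
  have "dist p x < d1" using p(1) hb by (simp add: dist_norm)
  hence "\<bar>Eu p w - Eu x w\<bar> < e" using d1 by (simp add: dist_real_def)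
  moreover have "dist q x < d2" using q(1) hb by (simp add: dist_norm add.commute)
  hence "\<bar>Ew q u - Ew x u\<bar> < e" using d2 by (simp add: dist_real_def)
  ultimately have "\<bar>Eu x w - Ew x u\<bar> < e + e" using pq by (simp add: abs_diff_less_iff)
  thus False unfolding e_def by simp
qed


lemma test_fun_deriv:
  assumes "test_fun U \<phi>"
  shows "(\<phi> has_derivative (\<lambda>h. pder \<phi> h x)) (at x)"
proof -
  have "Ck_on (Suc 0) UNIV \<phi>" using assms unfolding test_fun_def smooth_on_def by blast
  then obtain f' where f': "\<And>x. (\<phi> has_derivative f' x) (at x)" by auto
  have "(\<lambda>h. pder \<phi> h x) = f' x" unfolding pder_def using frechet_derivative_at[OF f'] by simp
  thus ?thesis using f' by simp
qed

lemma test_fun_cont: "test_fun U \<phi> \<Longrightarrow> continuous_on UNIV \<phi>"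
  unfolding test_fun_def smooth_on_def using Ck_on.simps(1) by blast

lemma test_fun_bounded:
  assumes "test_fun U \<phi>"
  shows "\<exists>B. \<forall>x. \<bar>\<phi> x\<bar> \<le> B"
proof -
  have c: "compact (tsupport \<phi>)" using assms by (simp add: test_fun_def)
  have "continuous_on (tsupport \<phi>) \<phi>"
    by (rule continuous_on_subset[OF test_fun_cont[OF assms] subset_UNIV])
  hence cc: "compact (\<phi> ` tsupport \<phi>)" by (rule compact_continuous_image[OF _ c])
  have "bounded (\<phi> ` tsupport \<phi>)" by (rule compact_imp_bounded[OF cc])
  then obtain B where B: "\<And>y. y \<in> \<phi> ` tsupport \<phi> \<Longrightarrow> norm y \<le> B"
    unfolding bounded_iff by auto
  have "\<bar>\<phi> x\<bar> \<le> max B 0" for x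
  proof (cases "x \<in> tsupport \<phi>")
    case True then have "norm (\<phi> x) \<le> B" using B by simp
    then show ?thesis by simp
  next
    case False
    have "{x. \<phi> x \<noteq> 0} \<subseteq> tsupport \<phi>" unfolding tsupport_def by (rule closure_subset)
    hence "\<phi> x = 0" using False by auto
    then show ?thesis by simp
  qed
  thus ?thesis by (intro exI allI)
qed

lemma pder_outside_support:
  assumes "test_fun U \<phi>" "x \<notin> tsupport \<phi>"
  shows "pder \<phi> h x = 0"
proof -
  have op: "open (- tsupport \<phi>)" unfolding tsupport_def by (rule open_Compl) simp
  have sub: "{x. \<phi> x \<noteq> 0} \<subseteq> tsupport \<phi>" unfolding tsupport_def by (rule closure_subset)
  have z: "\<And>y. y \<in> - tsupport \<phi> \<Longrightarrow> \<phi> y = 0"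
  proof -
    fix y assume "y \<in> - tsupport \<phi>"
    thus "\<phi> y = 0" using sub by auto
  qed
  have xin: "x \<in> - tsupport \<phi>" using assms(2) by simp
  have "((\<lambda>y. 0::real) has_derivative (\<lambda>h. 0)) (at x)" by simp
  hence "(\<phi> has_derivative (\<lambda>h. 0)) (at x)"
    by (rule has_derivative_transform_within_open[OF _ op xin]) (simp add: z)
  hence "(\<lambda>h. 0) = (\<lambda>h. pder \<phi> h x)"
    by (rule has_derivative_unique[OF _ test_fun_deriv[OF assms(1)]])
  from fun_cong[OF this, of h] show ?thesis by simp
qed

lemma test_fun_pder:
  assumes t: "test_fun U \<phi>" and hB: "h \<in> Basis"
  shows "test_fun U (pder \<phi> h)"
proof -
  have sm: "Ck_on k UNIV (pder \<phi> h)" for k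
  proof -
    have "Ck_on (Suc k) UNIV \<phi>" using t by (simp add: test_fun_def smooth_on_def)
    then obtain f' where f': "\<And>x. (\<phi> has_derivative f' x) (at x)"
      and ck: "\<And>i. i \<in> Basis \<Longrightarrow> Ck_on k UNIV (\<lambda>x. f' x i)" by auto
    have "pder \<phi> h = (\<lambda>x. f' x h)" unfolding pder_def by (rule ext) (simp add: frechet_derivative_at[OF f', symmetric])
    thus ?thesis using ck[OF hB] by simp
  qed
  have sub: "tsupport (pder \<phi> h) \<subseteq> tsupport \<phi>"
  proof -
    have "{x. pder \<phi> h x \<noteq> 0} \<subseteq> tsupport \<phi>"
    proof
      fix x assume "x \<in> {x. pder \<phi> h x \<noteq> 0}"
      thus "x \<in> tsupport \<phi>" using pder_outside_support[OF t, of x h] by auto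
    qed
    moreover have "closed (tsupport \<phi>)" unfolding tsupport_def by simp
    ultimately show ?thesis unfolding tsupport_def[of "pder \<phi> h"] by (rule closure_minimal)
  qed
  have "compact (tsupport (pder \<phi> h))"
  proof -
    have e: "tsupport (pder \<phi> h) \<inter> tsupport \<phi> = tsupport (pder \<phi> h)" using sub by (rule Int_absorb2)
    have "compact (tsupport \<phi>)" using t by (simp add: test_fun_def)
    moreover have "closed (tsupport (pder \<phi> h))" unfolding tsupport_def by simp
    ultimately have "compact (tsupport (pder \<phi> h) \<inter> tsupport \<phi>)" by (intro closed_Int_compact)
    thus ?thesis by (simp only: e)
  qed
  moreover have "smooth_on UNIV (pder \<phi> h)" unfolding smooth_on_def using sm by simp
  moreover have "tsupport (pder \<phi> h) \<subseteq> U"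
  proof -
    have "tsupport \<phi> \<subseteq> U" using t by (simp add: test_fun_def)
    thus ?thesis using sub by (rule order_trans[rotated])
  qed
  ultimately show ?thesis unfolding test_fun_def by (intro conjI)
qed

lemma test_fun_schwarz:
  fixes \<phi> :: "'a::euclidean_space \<Rightarrow> real"
  assumes t: "test_fun U \<phi>" and u: "u \<in> Basis" and w: "w \<in> Basis"
  shows "pder (pder \<phi> u) w x = pder (pder \<phi> w) u x"
proof -
  have tu: "test_fun U (pder \<phi> u)" by (rule test_fun_pder[OF t u])
  have tw: "test_fun U (pder \<phi> w)" by (rule test_fun_pder[OF t w])
  have d1: "\<And>x. (\<phi> has_derivative (\<lambda>h. pder \<phi> h x)) (at x)" by (rule test_fun_deriv[OF t])
  have d2: "\<And>x. ((\<lambda>y. pder \<phi> u y) has_derivative (\<lambda>h. pder (pder \<phi> u) h x)) (at x)"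
    using test_fun_deriv[OF tu] by simp
  have d3: "\<And>x. ((\<lambda>y. pder \<phi> w y) has_derivative (\<lambda>h. pder (pder \<phi> w) h x)) (at x)"
    using test_fun_deriv[OF tw] by simp
  have c1: "continuous_on UNIV (\<lambda>x. pder (pder \<phi> u) w x)"
    using test_fun_cont[OF test_fun_pder[OF tu w]] by simp
  have c2: "continuous_on UNIV (\<lambda>x. pder (pder \<phi> w) u x)"
    using test_fun_cont[OF test_fun_pder[OF tw u]] by simp
  show ?thesis
    using schwarz[of \<phi> "\<lambda>x h. pder \<phi> h x" u "\<lambda>x h. pder (pder \<phi> u) h x" w "\<lambda>x h. pder (pder \<phi> w) h x", OF d1 d2 d3 c1 c2] .
qed


definition L2M :: "'a measure \<Rightarrow> ('a \<Rightarrow> 'b::euclidean_space) \<Rightarrow> bool" where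
  "L2M M f \<longleftrightarrow> f \<in> borel_measurable M \<and> integrable M (\<lambda>x. (norm (f x))\<^sup>2)"

definition nsq :: "'a measure \<Rightarrow> ('a \<Rightarrow> 'b::euclidean_space) \<Rightarrow> real" where
  "nsq M f = (\<integral>x. (norm (f x))\<^sup>2 \<partial>M)"

definition ipM :: "'a measure \<Rightarrow> ('a \<Rightarrow> 'b::euclidean_space) \<Rightarrow> ('a \<Rightarrow> 'b) \<Rightarrow> real" where
  "ipM M f g = (\<integral>x. f x \<bullet> g x \<partial>M)"

definition RS :: "'a set \<Rightarrow> ('a \<Rightarrow> 'b::real_vector) \<Rightarrow> 'a \<Rightarrow> 'b" where
  "RS S f x = indicator S x *\<^sub>R f x"

lemma RS_in[simp]: "x \<in> S \<Longrightarrow> RS S f x = f x" by (simp add: RS_def)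
lemma RS_out[simp]: "x \<notin> S \<Longrightarrow> RS S f x = 0" by (simp add: RS_def)

lemma L2_iff: "L2 S f \<longleftrightarrow> L2M lborel (RS S f)"
proof -
  have e: "(\<lambda>x. indicator S x *\<^sub>R (norm (f x))\<^sup>2) = (\<lambda>x. (norm (RS S f x))\<^sup>2)"
    by (rule ext) (simp add: RS_def indicator_def)
  show ?thesis unfolding L2_def L2M_def set_borel_measurable_def set_integrable_def e
    by (simp add: RS_def[abs_def])
qed

lemma L2_inner_eq: "L2_inner S f g = ipM lborel (RS S f) (RS S g)"
proof -
  have "(\<lambda>x. indicator S x *\<^sub>R (f x \<bullet> g x)) = (\<lambda>x. RS S f x \<bullet> RS S g x)"
    by (rule ext) (simp add: RS_def indicator_def)
  thus ?thesis unfolding L2_inner_def ipM_def set_lebesgue_integral_def by simp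
qed

lemma L2_dist_sq_eq: "L2_dist_sq S f g = nsq lborel (\<lambda>x. RS S f x - RS S g x)"
proof -
  have "(\<lambda>x. indicator S x *\<^sub>R (norm (f x - g x))\<^sup>2) = (\<lambda>x. (norm (RS S f x - RS S g x))\<^sup>2)"
    by (rule ext) (simp add: RS_def indicator_def)
  thus ?thesis unfolding L2_dist_sq_def nsq_def set_lebesgue_integral_def by simp
qed

lemma L2M_meas: "L2M M f \<Longrightarrow> f \<in> borel_measurable M" by (simp add: L2M_def)
lemma L2M_int: "L2M M f \<Longrightarrow> integrable M (\<lambda>x. (norm (f x))\<^sup>2)" by (simp add: L2M_def)

lemma sq_bound_inner: "\<bar>(x::'b::real_inner) \<bullet> y\<bar> \<le> ((norm x)\<^sup>2 + (norm y)\<^sup>2) / 2"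
proof -
  have "\<bar>x \<bullet> y\<bar> \<le> norm x * norm y" by (rule Cauchy_Schwarz_ineq2)
  also have "\<dots> \<le> ((norm x)\<^sup>2 + (norm y)\<^sup>2) / 2"
    using sum_squares_bound[of "norm x" "norm y"] by (simp add: power2_eq_square)
  finally show ?thesis .
qed

lemma L2M_inner_integrable:
  assumes "L2M M f" "L2M M g"
  shows "integrable M (\<lambda>x. f x \<bullet> g x)"
proof (rule Bochner_Integration.integrable_bound)
  show "integrable M (\<lambda>x. ((norm (f x))\<^sup>2 + (norm (g x))\<^sup>2) / 2)"
    using assms by (intro integrable_divide Bochner_Integration.integrable_add) (simp_all add: L2M_def)
  show "(\<lambda>x. f x \<bullet> g x) \<in> borel_measurable M"
    using assms by (simp add: L2M_def borel_measurable_inner)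
  show "AE x in M. norm (f x \<bullet> g x) \<le> norm (((norm (f x))\<^sup>2 + (norm (g x))\<^sup>2) / 2)"
    using sq_bound_inner by (intro AE_I2) simp
qed

lemma L2M_add: assumes "L2M M f" "L2M M g" shows "L2M M (\<lambda>x. f x + g x)"
proof -
  have m: "(\<lambda>x. f x + g x) \<in> borel_measurable M" using assms by (intro borel_measurable_add) (simp_all add: L2M_def)
  have "integrable M (\<lambda>x. (norm (f x))\<^sup>2 + (norm (g x))\<^sup>2 + 2 * (f x \<bullet> g x))"
    using assms L2M_inner_integrable[OF assms] by (intro Bochner_Integration.integrable_add integrable_mult_right) (simp_all add: L2M_def)
  moreover have "(norm (f x + g x))\<^sup>2 = (norm (f x))\<^sup>2 + (norm (g x))\<^sup>2 + 2 * (f x \<bullet> g x)" for x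
    by (simp add: power2_norm_eq_inner algebra_simps inner_commute)
  ultimately have "integrable M (\<lambda>x. (norm (f x + g x))\<^sup>2)" by simp
  thus ?thesis using m by (simp add: L2M_def)
qed

lemma L2M_scale: assumes "L2M M f" shows "L2M M (\<lambda>x. c *\<^sub>R f x)"
proof -
  have "(norm (c *\<^sub>R f x))\<^sup>2 = c\<^sup>2 * (norm (f x))\<^sup>2" for x by (simp add: power_mult_distrib)
  moreover have "(\<lambda>x. c *\<^sub>R f x) \<in> borel_measurable M" using assms
    by (intro borel_measurable_scaleR) (simp_all add: L2M_def)
  ultimately show ?thesis using assms by (simp add: L2M_def)
qed

lemma L2M_uminus: assumes "L2M M f" shows "L2M M (\<lambda>x. - f x)"
  using L2M_scale[OF assms, of "-1"] by simp

lemma L2M_diff: assumes "L2M M f" "L2M M g" shows "L2M M (\<lambda>x. f x - g x)"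
  using L2M_add[OF assms(1) L2M_uminus[OF assms(2)]] by simp

lemma L2M_zero: "L2M M (\<lambda>x. 0)" by (simp add: L2M_def)

lemma L2M_cong_AE:
  assumes "L2M M f" "g \<in> borel_measurable M" "AE x in M. f x = g x"
  shows "L2M M g"
proof -
  have ae: "AE x in M. (norm (f x))\<^sup>2 = (norm (g x))\<^sup>2" using assms(3) by (rule AE_mp) (intro AE_I2, simp)
  have "integrable M (\<lambda>x. (norm (g x))\<^sup>2)"
    using integrable_cong_AE_imp[OF L2M_int[OF assms(1)] _ ae] assms(2) by simp
  thus ?thesis using assms by (simp add: L2M_def)
qed

lemma nsq_nonneg: "nsq M f \<ge> 0" unfolding nsq_def by (rule integral_nonneg_AE) simp

lemma ipM_add_left: assumes "L2M M f" "L2M M g" "L2M M h"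
  shows "ipM M (\<lambda>x. f x + g x) h = ipM M f h + ipM M g h"
  unfolding ipM_def inner_add_left
  by (rule Bochner_Integration.integral_add[OF L2M_inner_integrable[OF assms(1,3)] L2M_inner_integrable[OF assms(2,3)]])

lemma ipM_diff_left: assumes "L2M M f" "L2M M g" "L2M M h"
  shows "ipM M (\<lambda>x. f x - g x) h = ipM M f h - ipM M g h"
  unfolding ipM_def inner_diff_left
  by (rule Bochner_Integration.integral_diff[OF L2M_inner_integrable[OF assms(1,3)] L2M_inner_integrable[OF assms(2,3)]])

lemma ipM_commute: "ipM M f g = ipM M g f"
  unfolding ipM_def by (simp add: inner_commute)

lemma ipM_add_right: assumes "L2M M f" "L2M M g" "L2M M h"
  shows "ipM M h (\<lambda>x. f x + g x) = ipM M h f + ipM M h g"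
  using ipM_add_left[OF assms] by (simp add: ipM_commute)

lemma ipM_diff_right: assumes "L2M M f" "L2M M g" "L2M M h"
  shows "ipM M h (\<lambda>x. f x - g x) = ipM M h f - ipM M h g"
  using ipM_diff_left[OF assms] by (simp add: ipM_commute)

lemma nsq_ipM: "nsq M f = ipM M f f"
  unfolding nsq_def ipM_def by (simp add: power2_norm_eq_inner)

lemma nsq_add: assumes "L2M M f" "L2M M g"
  shows "nsq M (\<lambda>x. f x + g x) = nsq M f + nsq M g + 2 * ipM M f g"
proof -
  have "(norm (f x + g x))\<^sup>2 = (norm (f x))\<^sup>2 + (norm (g x))\<^sup>2 + 2 * (f x \<bullet> g x)" for x
    by (simp add: power2_norm_eq_inner algebra_simps inner_commute)
  hence "nsq M (\<lambda>x. f x + g x) = (\<integral>x. (norm (f x))\<^sup>2 + (norm (g x))\<^sup>2 + 2 * (f x \<bullet> g x) \<partial>M)"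
    unfolding nsq_def by simp
  also have "\<dots> = nsq M f + nsq M g + 2 * ipM M f g"
    using assms L2M_inner_integrable[OF assms] unfolding nsq_def ipM_def
    by (simp add: L2M_def Bochner_Integration.integrable_add)
  finally show ?thesis .
qed

lemma ipM_bound:
  assumes "L2M M f" "L2M M g" "c > 0"
  shows "\<bar>ipM M f g\<bar> \<le> (c * nsq M f + nsq M g / c) / 2"
proof -
  have "\<bar>ipM M f g\<bar> = \<bar>ipM M (\<lambda>x. sqrt c *\<^sub>R f x) (\<lambda>x. (1 / sqrt c) *\<^sub>R g x)\<bar>"
    unfolding ipM_def using assms(3) by simp
  also have "\<dots> \<le> (\<integral>x. \<bar>(sqrt c *\<^sub>R f x) \<bullet> ((1 / sqrt c) *\<^sub>R g x)\<bar> \<partial>M)"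
    unfolding ipM_def by (rule integral_abs_bound)
  also have "\<dots> \<le> (\<integral>x. ((norm (sqrt c *\<^sub>R f x))\<^sup>2 + (norm ((1 / sqrt c) *\<^sub>R g x))\<^sup>2) / 2 \<partial>M)"
  proof (rule integral_mono)
    show "integrable M (\<lambda>x. \<bar>(sqrt c *\<^sub>R f x) \<bullet> ((1 / sqrt c) *\<^sub>R g x)\<bar>)"
      by (intro integrable_abs L2M_inner_integrable L2M_scale assms)
    show "integrable M (\<lambda>x. ((norm (sqrt c *\<^sub>R f x))\<^sup>2 + (norm ((1 / sqrt c) *\<^sub>R g x))\<^sup>2) / 2)"
      using L2M_scale[OF assms(1), of "sqrt c"] L2M_scale[OF assms(2), of "1 / sqrt c"]
      by (intro integrable_divide Bochner_Integration.integrable_add) (simp_all add: L2M_def)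
  qed (rule sq_bound_inner)
  also have "\<dots> = (\<integral>x. (c * (norm (f x))\<^sup>2 + (norm (g x))\<^sup>2 / c) / 2 \<partial>M)"
    using assms(3) by (simp add: power_mult_distrib power_divide)
  also have "\<dots> = (c * nsq M f + nsq M g / c) / 2"
    using assms unfolding nsq_def by (simp add: L2M_def)
  finally show ?thesis .
qed

lemma half_lt_aux: "(a::real) < b \<Longrightarrow> 0 \<le> a \<Longrightarrow> a / 2 < b" by linarith

lemma ipM_zero_by_limit:
  assumes g: "L2M M g" and fk: "\<And>k. L2M M (fk k)" and f: "L2M M f"
    and lim: "(\<lambda>k. nsq M (\<lambda>x. f x - fk k x)) \<longlonglongrightarrow> 0"
    and z: "\<And>k. ipM M (fk k) g = 0"
  shows "ipM M f g = 0"
proof -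
  have bnd: "\<bar>ipM M f g\<bar> \<le> (c * nsq M (\<lambda>x. f x - fk k x) + nsq M g / c) / 2" if c: "c > 0" for c k
  proof -
    have "ipM M f g = ipM M (\<lambda>x. f x - fk k x) g"
      using ipM_diff_left[OF f fk g, of k] z by simp
    thus ?thesis using ipM_bound[OF L2M_diff[OF f fk] g c] by simp
  qed
  have le: "\<bar>ipM M f g\<bar> \<le> nsq M g / c / 2" if c: "c > 0" for c
  proof -
    have "(\<lambda>k. (c * nsq M (\<lambda>x. f x - fk k x) + nsq M g / c) / 2) \<longlonglongrightarrow> (c * 0 + nsq M g / c) / 2"
      by (intro tendsto_intros lim) simp
    hence "(\<lambda>k. (c * nsq M (\<lambda>x. f x - fk k x) + nsq M g / c) / 2) \<longlonglongrightarrow> nsq M g / c / 2" by simp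
    thus ?thesis using bnd[OF c] by (intro tendsto_lowerbound) (auto intro: always_eventually)
  qed
  show ?thesis
  proof (rule ccontr)
    assume ne: "ipM M f g \<noteq> 0"
    define c where "c = (nsq M g + 1) / \<bar>ipM M f g\<bar>"
    have c: "c > 0" using ne nsq_nonneg[of M g] by (simp add: c_def add_nonneg_pos)
    have "\<bar>ipM M f g\<bar> \<le> nsq M g / c / 2" by (rule le[OF c])
    also have "\<dots> = nsq M g * \<bar>ipM M f g\<bar> / (nsq M g + 1) / 2" using ne nsq_nonneg[of M g]
      by (simp add: c_def field_simps)
    also have "\<dots> < \<bar>ipM M f g\<bar>"
    proof -
      have "nsq M g / (nsq M g + 1) < 1" using nsq_nonneg[of M g] by simp
      hence "nsq M g * \<bar>ipM M f g\<bar> / (nsq M g + 1) < 1 * \<bar>ipM M f g\<bar>" using ne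
        by (metis mult_strict_right_mono times_divide_eq_left zero_less_abs_iff mult.commute)
      moreover have "nsq M g * \<bar>ipM M f g\<bar> / (nsq M g + 1) \<ge> 0" using nsq_nonneg[of M g] by simp
      ultimately show ?thesis using half_lt_aux by (metis mult_1)
    qed
    finally show False by simp
  qed
qed


lemma cont_meas_lborel: "continuous_on UNIV f \<Longrightarrow> f \<in> borel_measurable lborel"
  by (simp add: borel_measurable_continuous_onI)

lemma L2M_RS_bdd:
  fixes f :: "'a::euclidean_space \<Rightarrow> 'b::euclidean_space"
  assumes f: "f \<in> borel_measurable lborel" and C: "\<And>x. x \<in> S \<Longrightarrow> norm (f x) \<le> C"
    and S: "S \<in> sets lborel" "emeasure lborel S < \<infinity>"
  shows "L2M lborel (RS S f)"
  unfolding L2M_def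
proof
  show m: "RS S f \<in> borel_measurable lborel" unfolding RS_def[abs_def]
    using S f by (intro borel_measurable_scaleR borel_measurable_indicator) auto
  show "integrable lborel (\<lambda>x. (norm (RS S f x))\<^sup>2)"
  proof (rule Bochner_Integration.integrable_bound)
    show "integrable lborel (\<lambda>x. C\<^sup>2 * indicator S x)"
      using S by (intro integrable_mult_right integrable_real_indicator) auto
    show "(\<lambda>x. (norm (RS S f x))\<^sup>2) \<in> borel_measurable lborel" using m by simp
    show "AE x in lborel. norm ((norm (RS S f x))\<^sup>2) \<le> norm (C\<^sup>2 * indicator S x)"
    proof (intro AE_I2)
      fix x show "norm ((norm (RS S f x))\<^sup>2) \<le> norm (C\<^sup>2 * indicator S x)"
      proof (cases "x \<in> S")
        case True
        have "0 \<le> norm (f x)" by simp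
        hence "(norm (f x))\<^sup>2 \<le> C\<^sup>2" using C[OF True] by (intro power_mono) simp_all
        thus ?thesis using True by simp
      qed simp
    qed
  qed
qed

definition rot_perp' :: "real^2 \<Rightarrow> real^2" where "rot_perp' = rot_perp"

lemma rot_perp_nth: "rot_perp w $ 1 = w $ 2" "rot_perp w $ 2 = - (w $ 1)"
  unfolding rot_perp_def by simp_all

lemma rot_perp_inner: "rot_perp a \<bullet> b = a $ 2 * b $ 1 - a $ 1 * b $ 2"
  unfolding inner_vec_def sum_2 rot_perp_nth by simp

lemma rot_perp_diff: "rot_perp (a - b) = rot_perp a - rot_perp b"
  unfolding rot_perp_def by (simp add: vec_eq_iff)

lemma rot_perp_zero: "rot_perp 0 = 0"
  unfolding rot_perp_def by (simp add: vec_eq_iff)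

lemma rot_perp_norm: "norm (rot_perp a) = norm a"
proof -
  have "rot_perp a \<bullet> rot_perp a = a \<bullet> a"
    unfolding rot_perp_inner inner_vec_def sum_2 rot_perp_nth by simp
  thus ?thesis by (simp add: norm_eq_sqrt_inner)
qed

lemma rot_perp_linear: "bounded_linear rot_perp"
proof -
  have "linear rot_perp" unfolding rot_perp_def
    by (rule linearI) (simp_all add: vec_eq_iff)
  thus ?thesis by (simp add: linear_conv_bounded_linear)
qed

lemma rot_perp_cont: "continuous_on UNIV rot_perp"
  by (rule linear_continuous_on[OF rot_perp_linear])

lemma grad_cont:
  assumes "test_fun U \<phi>"
  shows "continuous_on UNIV (grad \<phi>)"
proof -
  have "\<And>i. continuous_on UNIV (\<lambda>x. pder \<phi> (axis i 1) x)"
    using test_fun_cont[OF test_fun_pder[OF assms]] by simp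
  thus ?thesis unfolding grad_def[abs_def] by (intro continuous_on_vec_lambda) simp
qed

lemma grad_bdd:
  assumes "test_fun U \<phi>"
  shows "\<exists>C. \<forall>x. norm (grad \<phi> x) \<le> C"
proof -
  obtain C1 where C1: "\<And>x. \<bar>pder \<phi> (axis 1 1) x\<bar> \<le> C1"
    using test_fun_bounded[OF test_fun_pder[OF assms, of "axis 1 1"]] by auto
  obtain C2 where C2: "\<And>x. \<bar>pder \<phi> (axis 2 1) x\<bar> \<le> C2"
    using test_fun_bounded[OF test_fun_pder[OF assms, of "axis 2 1"]] by auto
  have "norm (grad \<phi> x) \<le> C1 + C2" for x
  proof -
    have "norm (grad \<phi> x) \<le> (\<Sum>i\<in>UNIV. \<bar>grad \<phi> x $ i\<bar>)" by (rule norm_le_l1_cart)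
    also have "\<dots> = \<bar>pder \<phi> (axis 1 1) x\<bar> + \<bar>pder \<phi> (axis 2 1) x\<bar>"
      unfolding sum_2 grad_def by simp
    also have "\<dots> \<le> C1 + C2" using C1 C2 by (intro add_mono)
    finally show ?thesis .
  qed
  thus ?thesis by blast
qed

lemma bounded_open_sets:
  fixes \<Omega> :: "'a::euclidean_space set"
  assumes "open \<Omega>" "bounded \<Omega>"
  shows "\<Omega> \<in> sets lborel" "emeasure lborel \<Omega> < \<infinity>"
  using assms emeasure_bounded_finite by auto

lemma L2M_grad:
  fixes \<Omega> :: "(real^2) set"
  assumes "open \<Omega>" "bounded \<Omega>" "test_fun U \<phi>"
  shows "L2M lborel (RS \<Omega> (grad \<phi>))"
proof -
  obtain C where "\<And>x. norm (grad \<phi> x) \<le> C" using grad_bdd[OF assms(3)] by blast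
  thus ?thesis
    by (intro L2M_RS_bdd cont_meas_lborel grad_cont[OF assms(3)] bounded_open_sets[OF assms(1,2)])
qed

lemma norm_axis_real: "norm (axis i (a::real)) = \<bar>a\<bar>"
  by (simp add: norm_eq_sqrt_inner inner_axis_axis)

lemma L2M_axis_test:
  fixes \<Omega> :: "(real^2) set"
  assumes "open \<Omega>" "bounded \<Omega>" "test_fun U \<psi>"
  shows "L2M lborel (RS \<Omega> (\<lambda>x. axis i (\<psi> x)))"
proof -
  obtain C where C: "\<And>x. \<bar>\<psi> x\<bar> \<le> C" using test_fun_bounded[OF assms(3)] by blast
  have c: "continuous_on UNIV (\<lambda>x. if j = i then \<psi> x else 0)" for j
    using test_fun_cont[OF assms(3)] by (cases "j = i") simp_all
  have "continuous_on UNIV (\<lambda>x. axis i (\<psi> x))"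
    unfolding axis_def by (intro continuous_on_vec_lambda c)
  moreover have "norm (axis i (\<psi> x)) \<le> C" for x using C[of x] by (simp add: norm_axis_real)
  ultimately show ?thesis
    by (intro L2M_RS_bdd cont_meas_lborel bounded_open_sets[OF assms(1,2)])
qed

lemma weak_grad_test_zero:
  fixes \<Omega> :: "(real^2) set"
  assumes op: "open \<Omega>" and bd: "bounded \<Omega>" and t: "test_fun \<Omega> \<phi>"
    and wg: "weak_grad \<Omega> g b"
  shows "ipM lborel (RS \<Omega> (\<lambda>x. rot_perp (grad \<phi> x))) (RS \<Omega> b) = 0"
proof -
  define e1 :: "real^2" where "e1 = axis 1 1"
  define e2 :: "real^2" where "e2 = axis 2 1"
  have e1B: "e1 \<in> Basis" and e2B: "e2 \<in> Basis" unfolding e1_def e2_def by simp_all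
  define \<psi>1 where "\<psi>1 = pder \<phi> e2"
  define \<psi>2 where "\<psi>2 = pder \<phi> e1"
  have t1: "test_fun \<Omega> \<psi>1" unfolding \<psi>1_def by (rule test_fun_pder[OF t e2B])
  have t2: "test_fun \<Omega> \<psi>2" unfolding \<psi>2_def by (rule test_fun_pder[OF t e1B])
  have bL2: "L2M lborel (RS \<Omega> b)" using wg unfolding weak_grad_def L2_iff by blast
  define V1 where "V1 = RS \<Omega> (\<lambda>x. axis (1::2) (\<psi>1 x))"
  define V2 where "V2 = RS \<Omega> (\<lambda>x. axis (2::2) (\<psi>2 x))"
  have V1: "L2M lborel V1" unfolding V1_def by (rule L2M_axis_test[OF op bd t1])
  have V2: "L2M lborel V2" unfolding V2_def by (rule L2M_axis_test[OF op bd t2])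
  have eq: "RS \<Omega> (\<lambda>x. rot_perp (grad \<phi> x)) = (\<lambda>x. V1 x - V2 x)"
  proof (rule ext)
    fix x show "RS \<Omega> (\<lambda>x. rot_perp (grad \<phi> x)) x = V1 x - V2 x"
      unfolding V1_def V2_def RS_def rot_perp_def grad_def \<psi>1_def \<psi>2_def e1_def e2_def
      by (simp add: vec_eq_iff axis_def forall_2 indicator_def)
  qed
  have i1: "ipM lborel V1 (RS \<Omega> b) = (LINT x:\<Omega>|lborel. b x $ 1 * \<psi>1 x)"
    unfolding ipM_def V1_def set_lebesgue_integral_def
    by (rule Bochner_Integration.integral_cong) (auto simp: RS_def inner_axis' indicator_def)
  have i2: "ipM lborel V2 (RS \<Omega> b) = (LINT x:\<Omega>|lborel. b x $ 2 * \<psi>2 x)"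
    unfolding ipM_def V2_def set_lebesgue_integral_def
    by (rule Bochner_Integration.integral_cong) (auto simp: RS_def inner_axis' indicator_def)
  have w1: "(LINT x:\<Omega>|lborel. g x * pder \<psi>1 (axis 1 1) x) = - (LINT x:\<Omega>|lborel. b x $ 1 * \<psi>1 x)"
    using wg t1 unfolding weak_grad_def by blast
  have w2: "(LINT x:\<Omega>|lborel. g x * pder \<psi>2 (axis 2 1) x) = - (LINT x:\<Omega>|lborel. b x $ 2 * \<psi>2 x)"
    using wg t2 unfolding weak_grad_def by blast
  have sw: "pder \<psi>1 (axis 1 1) x = pder \<psi>2 (axis 2 1) x" for x
    unfolding \<psi>1_def \<psi>2_def using test_fun_schwarz[OF t e2B e1B, of x] by (simp add: e1_def e2_def)
  have "(LINT x:\<Omega>|lborel. b x $ 1 * \<psi>1 x) = (LINT x:\<Omega>|lborel. b x $ 2 * \<psi>2 x)"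
    using w1 w2 sw by simp
  thus ?thesis unfolding eq using ipM_diff_left[OF V1 V2 bL2] i1 i2 by simp
qed

lemma FG_orth:
  fixes \<Omega> :: "(real^2) set"
  assumes op: "open \<Omega>" and bd: "bounded \<Omega>" and a: "a \<in> Fspace \<Omega>" and b: "b \<in> Gspace \<Omega>"
  shows "ipM lborel (RS \<Omega> a) (RS \<Omega> b) = 0"
proof -
  have aL2: "L2M lborel (RS \<Omega> a)" using a unfolding Fspace_def L2_iff by blast
  obtain f w where H: "H10 \<Omega> f w" and aw: "AE x in lborel. x \<in> \<Omega> \<longrightarrow> a x = rot_perp (w x)"
    using a unfolding Fspace_def by blast
  obtain g where wg: "weak_grad \<Omega> g b" using b unfolding Gspace_def by blast
  have bL2: "L2M lborel (RS \<Omega> b)" using b unfolding Gspace_def L2_iff by blast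
  have wL2: "L2M lborel (RS \<Omega> w)" using H unfolding H10_def weak_grad_def L2_iff by blast
  obtain \<phi>s where t: "\<And>k. test_fun \<Omega> (\<phi>s k)"
    and lim: "(\<lambda>k. L2_dist_sq \<Omega> (\<phi>s k) f + L2_dist_sq \<Omega> (grad (\<phi>s k)) w) \<longlonglongrightarrow> 0"
    using H unfolding H10_def by blast
  have lim2: "(\<lambda>k. L2_dist_sq \<Omega> (grad (\<phi>s k)) w) \<longlonglongrightarrow> 0"
  proof (rule tendsto_sandwich[OF _ _ tendsto_const lim])
    show "\<forall>\<^sub>F k in sequentially. 0 \<le> L2_dist_sq \<Omega> (grad (\<phi>s k)) w"
      by (intro always_eventually allI) (simp add: L2_dist_sq_eq nsq_nonneg)
    show "\<forall>\<^sub>F k in sequentially. L2_dist_sq \<Omega> (grad (\<phi>s k)) w \<le> L2_dist_sq \<Omega> (\<phi>s k) f + L2_dist_sq \<Omega> (grad (\<phi>s k)) w"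
      by (intro always_eventually allI) (simp add: L2_dist_sq_eq nsq_nonneg)
  qed
  have rotm: "rot_perp \<in> borel_measurable borel" by (rule borel_measurable_continuous_onI[OF rot_perp_cont])
  define RW where "RW = RS \<Omega> (\<lambda>x. rot_perp (w x))"
  have RWe: "RW = (\<lambda>x. rot_perp (RS \<Omega> w x))"
    unfolding RW_def RS_def by (rule ext) (simp add: indicator_def rot_perp_zero)
  have RW: "L2M lborel RW"
  proof -
    have "(\<lambda>x. rot_perp (RS \<Omega> w x)) \<in> borel_measurable lborel"
      using measurable_compose[OF L2M_meas[OF wL2] rotm] by (simp add: o_def)
    moreover have "integrable lborel (\<lambda>x. (norm (rot_perp (RS \<Omega> w x)))\<^sup>2)"
      using L2M_int[OF wL2] by (simp add: rot_perp_norm)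
    ultimately show ?thesis unfolding RWe L2M_def by blast
  qed
  define RP where "RP k = RS \<Omega> (\<lambda>x. rot_perp (grad (\<phi>s k) x))" for k
  have RPe: "RP k = (\<lambda>x. rot_perp (RS \<Omega> (grad (\<phi>s k)) x))" for k
    unfolding RP_def RS_def by (rule ext) (simp add: indicator_def rot_perp_zero)
  have RP: "L2M lborel (RP k)" for k
  proof -
    have G: "L2M lborel (RS \<Omega> (grad (\<phi>s k)))" by (rule L2M_grad[OF op bd t])
    have "(\<lambda>x. rot_perp (RS \<Omega> (grad (\<phi>s k)) x)) \<in> borel_measurable lborel"
      using measurable_compose[OF L2M_meas[OF G] rotm] by (simp add: o_def)
    moreover have "integrable lborel (\<lambda>x. (norm (rot_perp (RS \<Omega> (grad (\<phi>s k)) x)))\<^sup>2)"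
      using L2M_int[OF G] by (simp add: rot_perp_norm)
    ultimately show ?thesis unfolding RPe L2M_def by blast
  qed
  have nsq_eq: "nsq lborel (\<lambda>x. RW x - RP k x) = L2_dist_sq \<Omega> (grad (\<phi>s k)) w" for k
  proof -
    have "norm (RW x - RP k x) = norm (RS \<Omega> (grad (\<phi>s k)) x - RS \<Omega> w x)" for x
      unfolding RWe RPe rot_perp_diff[symmetric] rot_perp_norm by (simp add: norm_minus_commute)
    thus ?thesis unfolding L2_dist_sq_eq nsq_def by simp
  qed
  have z: "ipM lborel (RP k) (RS \<Omega> b) = 0" for k
    unfolding RP_def by (rule weak_grad_test_zero[OF op bd t wg])
  have RW0: "ipM lborel RW (RS \<Omega> b) = 0"
    by (rule ipM_zero_by_limit[OF bL2 RP RW _ z]) (use lim2 nsq_eq in simp)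
  have "ipM lborel (RS \<Omega> a) (RS \<Omega> b) = ipM lborel RW (RS \<Omega> b)"
    unfolding ipM_def
  proof (rule integral_cong_AE)
    show "(\<lambda>x. RS \<Omega> a x \<bullet> RS \<Omega> b x) \<in> borel_measurable lborel"
      using aL2 bL2 by (simp add: L2M_def borel_measurable_inner)
    show "(\<lambda>x. RW x \<bullet> RS \<Omega> b x) \<in> borel_measurable lborel"
      using RW bL2 by (simp add: L2M_def borel_measurable_inner)
    show "AE x in lborel. RS \<Omega> a x \<bullet> RS \<Omega> b x = RW x \<bullet> RS \<Omega> b x"
      using aw by (rule AE_mp) (intro AE_I2, auto simp: RW_def RS_def indicator_def)
  qed
  thus ?thesis using RW0 by simp
qed


lemma norm_sum_sq_le: "(norm ((a::'b::real_normed_vector) + b))\<^sup>2 \<le> 2 * (norm a)\<^sup>2 + 2 * (norm b)\<^sup>2"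
proof -
  have "norm (a + b) \<le> norm a + norm b" by (rule norm_triangle_ineq)
  hence "(norm (a + b))\<^sup>2 \<le> (norm a + norm b)\<^sup>2" by (intro power_mono) simp_all
  also have "\<dots> \<le> 2 * (norm a)\<^sup>2 + 2 * (norm b)\<^sup>2"
    using sum_squares_bound[of "norm a" "norm b"] by (simp add: power2_eq_square algebra_simps)
  finally show ?thesis .
qed

lemma nsq_add_le: assumes "L2M M f" "L2M M g"
  shows "nsq M (\<lambda>x. f x + g x) \<le> 2 * nsq M f + 2 * nsq M g"
proof -
  have "nsq M (\<lambda>x. f x + g x) \<le> (\<integral>x. 2 * (norm (f x))\<^sup>2 + 2 * (norm (g x))\<^sup>2 \<partial>M)"
    unfolding nsq_def
  proof (rule integral_mono)
    show "integrable M (\<lambda>x. (norm (f x + g x))\<^sup>2)" using L2M_add[OF assms] by (simp add: L2M_def)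
    show "integrable M (\<lambda>x. 2 * (norm (f x))\<^sup>2 + 2 * (norm (g x))\<^sup>2)"
      using assms by (intro Bochner_Integration.integrable_add integrable_mult_right) (simp_all add: L2M_def)
  qed (rule norm_sum_sq_le)
  also have "\<dots> = 2 * nsq M f + 2 * nsq M g"
    using assms unfolding nsq_def by (simp add: L2M_def)
  finally show ?thesis .
qed

lemma nsq_diff_le: assumes "L2M M f" "L2M M g"
  shows "nsq M (\<lambda>x. f x - g x) \<le> 2 * nsq M f + 2 * nsq M g"
proof -
  have "nsq M (\<lambda>x. - g x) = nsq M g" unfolding nsq_def by simp
  thus ?thesis using nsq_add_le[OF assms(1) L2M_uminus[OF assms(2)]] by simp
qed

lemma nsq_cong_AE:
  assumes "f \<in> borel_measurable M" "g \<in> borel_measurable M" "AE x in M. f x = g x"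
  shows "nsq M f = nsq M g"
  unfolding nsq_def using assms(3) by (intro integral_cong_AE) (use assms(1,2) in \<open>auto elim: AE_mp\<close>)

lemma ipM_cong_AE:
  assumes "f \<in> borel_measurable M" "g \<in> borel_measurable M" "h \<in> borel_measurable M"
    "AE x in M. f x = g x"
  shows "ipM M f h = ipM M g h"
  unfolding ipM_def using assms(4) by (intro integral_cong_AE) (use assms(1-3) in \<open>auto elim: AE_mp\<close>)

lemma L2_fatou:
  assumes g: "L2M M g" and f: "\<And>k. L2M M (f k)" and h: "h \<in> borel_measurable M"
    and bnd: "\<And>k. k \<ge> j \<Longrightarrow> nsq M (\<lambda>x. g x - f k x) \<le> e"
    and conv: "AE x in M. (\<lambda>k. f k x) \<longlonglongrightarrow> h x"
  shows "L2M M (\<lambda>x. g x - h x) \<and> nsq M (\<lambda>x. g x - h x) \<le> e"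
proof -
  define u where "u k x = ennreal ((norm (g x - f k x))\<^sup>2)" for k x
  have um: "u k \<in> borel_measurable M" for k
    using L2M_meas[OF L2M_diff[OF g f[of k]]] unfolding u_def by measurable
  have ui: "integral\<^sup>N M (u k) = ennreal (nsq M (\<lambda>x. g x - f k x))" for k
    unfolding u_def nsq_def
    by (rule nn_integral_eq_integral) (use L2M_diff[OF g f[of k]] in \<open>simp_all add: L2M_def\<close>)
  have "AE x in M. liminf (\<lambda>k. u k x) = ennreal ((norm (g x - h x))\<^sup>2)"
    using conv
  proof (rule AE_mp, intro AE_I2 impI)
    fix x assume c: "(\<lambda>k. f k x) \<longlonglongrightarrow> h x"
    have "(\<lambda>k. u k x) \<longlonglongrightarrow> ennreal ((norm (g x - h x))\<^sup>2)"
      unfolding u_def by (intro tendsto_intros c)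
    thus "liminf (\<lambda>k. u k x) = ennreal ((norm (g x - h x))\<^sup>2)"
      by (rule lim_imp_Liminf[OF trivial_limit_sequentially])
  qed
  hence "(\<integral>\<^sup>+ x. ennreal ((norm (g x - h x))\<^sup>2) \<partial>M) = (\<integral>\<^sup>+ x. liminf (\<lambda>k. u k x) \<partial>M)"
    by (intro nn_integral_cong_AE) (auto elim: AE_mp)
  also have "\<dots> \<le> liminf (\<lambda>k. integral\<^sup>N M (u k))" by (rule nn_integral_liminf[OF um])
  also have "\<dots> \<le> ennreal e"
  proof (rule Liminf_le)
    show "\<forall>\<^sub>F k in sequentially. integral\<^sup>N M (u k) \<le> ennreal e"
      unfolding ui eventually_sequentially using bnd by (auto intro!: ennreal_leI)
  qed simp
  finally have fin: "(\<integral>\<^sup>+ x. ennreal ((norm (g x - h x))\<^sup>2) \<partial>M) \<le> ennreal e" .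
  have m: "(\<lambda>x. g x - h x) \<in> borel_measurable M" using L2M_meas[OF g] h by (rule borel_measurable_diff)
  have "e \<ge> 0"
  proof -
    have "nsq M (\<lambda>x. g x - f j x) \<le> e" by (rule bnd) simp
    thus ?thesis using nsq_nonneg[of M "\<lambda>x. g x - f j x"] by linarith
  qed
  have int: "integrable M (\<lambda>x. (norm (g x - h x))\<^sup>2)"
  proof (rule integrableI_bounded)
    show "(\<lambda>x. (norm (g x - h x))\<^sup>2) \<in> borel_measurable M" using m by simp
    show "(\<integral>\<^sup>+ x. ennreal (norm ((norm (g x - h x))\<^sup>2)) \<partial>M) < \<infinity>"
      using fin by (simp add: le_less_trans)
  qed
  have "ennreal (nsq M (\<lambda>x. g x - h x)) \<le> ennreal e"
    using fin unfolding nsq_def by (subst nn_integral_eq_integral[symmetric]) (use int in simp_all)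
  hence "nsq M (\<lambda>x. g x - h x) \<le> e" using \<open>e \<ge> 0\<close> by (simp add: ennreal_le_iff)
  thus ?thesis using int m by (simp add: L2M_def)
qed

lemma amgm_ind:
  fixes d c :: real
  assumes "c > 0" "d \<ge> 0"
  shows "d \<le> (c + d\<^sup>2 / c) / 2"
proof -
  have "0 \<le> (d - c)\<^sup>2" by simp
  hence "2 * d * c \<le> c * c + d\<^sup>2" by (simp add: power2_eq_square algebra_simps)
  hence "2 * d * c / c \<le> (c * c + d\<^sup>2) / c" using assms(1) by (intro divide_right_mono) simp_all
  thus ?thesis using assms(1) by (simp add: field_simps)
qed

lemma AE_conv_fast:
  fixes f :: "nat \<Rightarrow> 'a \<Rightarrow> 'b::euclidean_space"
  assumes f: "\<And>k. L2M M (f k)" and S: "S \<in> sets M" "emeasure M S < \<infinity>"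
    and zero: "\<And>k x. x \<notin> S \<Longrightarrow> f k x = 0"
    and bnd: "\<And>k. nsq M (\<lambda>x. f (Suc k) x - f k x) \<le> (1/4)^k"
  shows "AE x in M. convergent (\<lambda>k. f k x)"
proof -
  define d where "d k x = norm (f (Suc k) x - f k x)" for k x
  define \<mu> where "\<mu> = measure M S"
  have dm: "(\<lambda>x. ennreal (d k x)) \<in> borel_measurable M" for k
    using L2M_meas[OF L2M_diff[OF f[of "Suc k"] f[of k]]] unfolding d_def by measurable
  have indint: "integrable M (indicator S :: 'a \<Rightarrow> real)" using S by simp
  have Ssp: "S \<inter> space M = S" using sets.sets_into_space[OF S(1)] by blast
  have each: "integral\<^sup>N M (\<lambda>x. ennreal (d k x)) \<le> ennreal ((1/2)^k * (\<mu> + 1) / 2)" for k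
  proof -
    define c :: real where "c = (1/2)^k"
    have c: "c > 0" by (simp add: c_def)
    have dL: "L2M M (\<lambda>x. f (Suc k) x - f k x)" by (rule L2M_diff[OF f f])
    have pw: "d k x \<le> (c * indicator S x + (d k x)\<^sup>2 / c) / 2" for x
    proof (cases "x \<in> S")
      case True thus ?thesis using amgm_ind[OF c, of "d k x"] by (simp add: d_def)
    next
      case False thus ?thesis by (simp add: d_def zero)
    qed
    have int2: "integrable M (\<lambda>x. (c * indicator S x + (d k x)\<^sup>2 / c) / 2)"
      using indint L2M_int[OF dL] unfolding d_def
      by (intro integrable_divide Bochner_Integration.integrable_add integrable_mult_right) simp_all
    have "integral\<^sup>N M (\<lambda>x. ennreal (d k x)) \<le> (\<integral>\<^sup>+ x. ennreal ((c * indicator S x + (d k x)\<^sup>2 / c) / 2) \<partial>M)"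
      by (intro nn_integral_mono ennreal_leI pw)
    also have "\<dots> = ennreal (\<integral>x. (c * indicator S x + (d k x)\<^sup>2 / c) / 2 \<partial>M)"
      by (rule nn_integral_eq_integral[OF int2]) (simp add: c less_imp_le)
    also have "(\<integral>x. (c * indicator S x + (d k x)\<^sup>2 / c) / 2 \<partial>M) = (c * \<mu> + nsq M (\<lambda>x. f (Suc k) x - f k x) / c) / 2"
      using indint L2M_int[OF dL] Ssp unfolding d_def nsq_def \<mu>_def by simp
    also have "\<dots> \<le> (c * \<mu> + c\<^sup>2 / c) / 2"
    proof -
      have "c\<^sup>2 = (1/2 * (1/2::real))^k" unfolding c_def power2_eq_square power_mult_distrib[symmetric] ..
      hence "c\<^sup>2 = (1/4)^k" by simp
      thus ?thesis using bnd[of k] c by (intro divide_right_mono add_left_mono) simp_all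
    qed
    also have "\<dots> = (1/2)^k * (\<mu> + 1) / 2" using c by (simp add: c_def power2_eq_square algebra_simps)
    finally show ?thesis by (simp add: ennreal_leI)
  qed
  have sg: "summable (\<lambda>k. (1/2::real)^k * (\<mu> + 1) / 2)"
    by (intro summable_divide summable_mult2 summable_geometric) simp
  have mu0: "\<mu> \<ge> 0" by (simp add: \<mu>_def)
  have "(\<integral>\<^sup>+ x. (\<Sum>k. ennreal (d k x)) \<partial>M) = (\<Sum>k. integral\<^sup>N M (\<lambda>x. ennreal (d k x)))"
    by (rule nn_integral_suminf[OF dm])
  also have "\<dots> \<le> (\<Sum>k. ennreal ((1/2)^k * (\<mu> + 1) / 2))"
    by (intro suminf_le each) simp_all
  also have "\<dots> = ennreal (\<Sum>k. (1/2)^k * (\<mu> + 1) / 2)"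
    by (rule suminf_ennreal2[OF _ sg]) (simp add: mu0)
  finally have "(\<integral>\<^sup>+ x. (\<Sum>k. ennreal (d k x)) \<partial>M) < \<infinity>"
    by (rule le_less_trans) simp
  hence "(\<integral>\<^sup>+ x. (\<Sum>k. ennreal (d k x)) \<partial>M) \<noteq> \<infinity>" by simp
  hence ae: "AE x in M. (\<Sum>k. ennreal (d k x)) \<noteq> \<infinity>"
    by (intro nn_integral_PInf_AE) (use dm in measurable)
  show ?thesis using ae
  proof (rule AE_mp, intro AE_I2 impI)
    fix x assume "(\<Sum>k. ennreal (d k x)) \<noteq> \<infinity>"
    hence "summable (\<lambda>k. d k x)" by (intro summable_suminf_not_top) (simp_all add: d_def)
    hence "summable (\<lambda>k. f (Suc k) x - f k x)" unfolding d_def by (rule summable_norm_cancel)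
    hence "convergent (\<lambda>n. \<Sum>k<n. f (Suc k) x - f k x)" by (simp add: summable_iff_convergent)
    hence "convergent (\<lambda>n. f 0 x + (\<Sum>k<n. f (Suc k) x - f k x))"
      by (intro convergent_add convergent_const)
    thus "convergent (\<lambda>k. f k x)" by (simp add: sum_lessThan_telescope[of "\<lambda>n. f n x"])
  qed
qed


lemma pair_lb: "pair_sigma_finite (lborel::'a::euclidean_space measure) (lborel::'b::euclidean_space measure)"
  by (simp add: pair_sigma_finite_def lborel.sigma_finite_measure_axioms)

lemma slice_meas:
  fixes F :: "('a::euclidean_space \<times> 'b::euclidean_space) \<Rightarrow> 'c::euclidean_space"
  assumes "F \<in> borel_measurable lborel"
  shows "(\<lambda>y. F (y, t)) \<in> borel_measurable lborel"
proof -
  have "F \<in> borel_measurable (lborel \<Otimes>\<^sub>M lborel)" using assms by (simp add: lborel_prod)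
  thus ?thesis by (rule measurable_Pair1) simp
qed

lemma prod_ipM:
  fixes F G :: "('a::euclidean_space \<times> 'b::euclidean_space) \<Rightarrow> 'c::euclidean_space"
  assumes F: "L2M lborel F" and G: "L2M lborel G"
  shows "ipM lborel F G = (\<integral>t. ipM lborel (\<lambda>y. F (y, t)) (\<lambda>y. G (y, t)) \<partial>lborel)"
    and "integrable lborel (\<lambda>t. ipM lborel (\<lambda>y. F (y, t)) (\<lambda>y. G (y, t)))"
proof -
  interpret P: pair_sigma_finite "lborel::'a measure" "lborel::'b measure" by (rule pair_lb)
  have e: "(\<lambda>(y, t). F (y, t) \<bullet> G (y, t)) = (\<lambda>x. F x \<bullet> G x)" by auto
  have "integrable (lborel \<Otimes>\<^sub>M lborel) (\<lambda>x. F x \<bullet> G x)"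
    using L2M_inner_integrable[OF F G] by (simp add: lborel_prod)
  hence I: "integrable (lborel \<Otimes>\<^sub>M lborel) (case_prod (\<lambda>y t. F (y, t) \<bullet> G (y, t)))" by (simp only: e)
  show "ipM lborel F G = (\<integral>t. ipM lborel (\<lambda>y. F (y, t)) (\<lambda>y. G (y, t)) \<partial>lborel)"
    using pair_sigma_finite.integral_snd[OF pair_lb I] unfolding ipM_def e by (simp add: lborel_prod)
  show "integrable lborel (\<lambda>t. ipM lborel (\<lambda>y. F (y, t)) (\<lambda>y. G (y, t)))"
    using pair_sigma_finite.integrable_snd[OF pair_lb I] unfolding ipM_def by simp
qed

lemma prod_ipM_zero:
  fixes F G :: "('a::euclidean_space \<times> 'b::euclidean_space) \<Rightarrow> 'c::euclidean_space"
  assumes F: "L2M lborel F" and G: "L2M lborel G"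
    and z: "\<And>t. ipM lborel (\<lambda>y. F (y, t)) (\<lambda>y. G (y, t)) = 0"
  shows "ipM lborel F G = 0"
  using prod_ipM(1)[OF F G] z by simp

lemma prod_nsq_le:
  fixes F :: "((real^2) \<times> real) \<Rightarrow> real^2"
  assumes F: "L2M lborel F" and out: "\<And>t y. t \<notin> {0<..<L} \<Longrightarrow> F (y, t) = 0"
    and bnd: "\<And>t. t \<in> {0<..<L} \<Longrightarrow> nsq lborel (\<lambda>y. F (y, t)) \<le> e" and L: "L \<ge> 0"
  shows "nsq lborel F \<le> e * L"
proof -
  have "nsq lborel F = (\<integral>t. nsq lborel (\<lambda>y. F (y, t)) \<partial>lborel)"
    using prod_ipM(1)[OF F F] by (simp add: nsq_ipM)
  also have "\<dots> \<le> (\<integral>t. e * indicator {0<..<L} t \<partial>lborel)"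
  proof (rule integral_mono)
    show "integrable lborel (\<lambda>t. nsq lborel (\<lambda>y. F (y, t)))"
      using prod_ipM(2)[OF F F] by (simp add: nsq_ipM)
    show "integrable lborel (\<lambda>t. e * indicator {0<..<L} t :: real)"
      using L by (intro integrable_mult_right integrable_real_indicator) auto
    fix t show "nsq lborel (\<lambda>y. F (y, t)) \<le> e * indicator {0<..<L} t"
    proof (cases "t \<in> {0<..<L}")
      case True thus ?thesis using bnd[OF True] by simp
    next
      case False thus ?thesis using out[OF False] by (simp add: nsq_def)
    qed
  qed
  also have "\<dots> = e * L" using L by simp
  finally show ?thesis .
qed

lemma prod_L2M:
  fixes F :: "((real^2) \<times> real) \<Rightarrow> real^2"
  assumes Fm: "F \<in> borel_measurable lborel" and out: "\<And>t y. t \<notin> {0<..<L} \<Longrightarrow> F (y, t) = 0"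
    and sl: "\<And>t. t \<in> {0<..<L} \<Longrightarrow> L2M lborel (\<lambda>y. F (y, t)) \<and> nsq lborel (\<lambda>y. F (y, t)) \<le> C"
    and L: "L \<ge> 0"
  shows "L2M lborel F"
proof -
  interpret P: pair_sigma_finite "lborel::(real^2) measure" "lborel::real measure" by (rule pair_lb)
  have m2: "(\<lambda>x. ennreal ((norm (F x))\<^sup>2)) \<in> borel_measurable (lborel \<Otimes>\<^sub>M lborel)"
    using Fm by (simp add: lborel_prod)
  have C0: "C \<ge> 0" if "t \<in> {0<..<L}" for t using sl[OF that] nsq_nonneg[of lborel "\<lambda>y. F (y, t)"] by linarith
  have "(\<integral>\<^sup>+ x. ennreal ((norm (F x))\<^sup>2) \<partial>lborel) = (\<integral>\<^sup>+ x. ennreal ((norm (F x))\<^sup>2) \<partial>(lborel \<Otimes>\<^sub>M lborel))"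
    by (simp add: lborel_prod)
  also have "\<dots> = (\<integral>\<^sup>+ t. (\<integral>\<^sup>+ y. ennreal ((norm (F (y, t)))\<^sup>2) \<partial>lborel) \<partial>lborel)"
    by (rule pair_sigma_finite.nn_integral_snd[OF pair_lb m2, symmetric])
  also have "\<dots> \<le> (\<integral>\<^sup>+ t. ennreal (max C 0) * indicator {0<..<L} t \<partial>lborel)"
  proof (rule nn_integral_mono)
    fix t show "(\<integral>\<^sup>+ y. ennreal ((norm (F (y, t)))\<^sup>2) \<partial>lborel) \<le> ennreal (max C 0) * indicator {0<..<L} t"
    proof (cases "t \<in> {0<..<L}")
      case True
      have "(\<integral>\<^sup>+ y. ennreal ((norm (F (y, t)))\<^sup>2) \<partial>lborel) = ennreal (nsq lborel (\<lambda>y. F (y, t)))"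
        unfolding nsq_def by (rule nn_integral_eq_integral) (use sl[OF True] in \<open>simp_all add: L2M_def\<close>)
      also have "\<dots> \<le> ennreal (max C 0)" using sl[OF True] by (intro ennreal_leI) (simp add: le_max_iff_disj)
      finally show ?thesis using True by simp
    next
      case False thus ?thesis using out[OF False] by simp
    qed
  qed
  also have "\<dots> = ennreal (max C 0) * ennreal L" using L by (simp add: nn_integral_cmult_indicator)
  also have "\<dots> < \<infinity>" by (simp add: ennreal_mult_less_top)
  finally have fin: "(\<integral>\<^sup>+ x. ennreal ((norm (F x))\<^sup>2) \<partial>lborel) < \<infinity>" .
  have "integrable lborel (\<lambda>x. (norm (F x))\<^sup>2)"
  proof (rule integrableI_bounded)
    show "(\<lambda>x. (norm (F x))\<^sup>2) \<in> borel_measurable lborel" using Fm by simp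
    show "(\<integral>\<^sup>+ x. ennreal (norm ((norm (F x))\<^sup>2)) \<partial>lborel) < \<infinity>" using fin by simp
  qed
  thus ?thesis using Fm by (simp add: L2M_def)
qed


definition idx :: "real \<Rightarrow> nat \<Rightarrow> real \<Rightarrow> nat" where
  "idx L N t = nat \<lfloor>t * real N / L\<rfloor>"

definition tau :: "real \<Rightarrow> nat \<Rightarrow> nat \<Rightarrow> real" where
  "tau L N n = real n * (L / real N)"

lemma idx_facts:
  assumes L: "L > 0" and N: "N \<ge> 1" and t: "t \<in> {0<..<L}"
  shows "idx L N t < N" and "tau L N (idx L N t) \<le> t" and "t - tau L N (idx L N t) < L / real N"
    and "\<And>n. n < N \<Longrightarrow> layer_chi L N n t = (if n = idx L N t then 1 else 0)"
proof -
  define r where "r = t * real N / L"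
  have Npos: "real N > 0" using N by simp
  have r0: "r > 0" using t L Npos by (simp add: r_def)
  have rN: "r < real N" using t L Npos by (simp add: r_def field_simps)
  define k where "k = \<lfloor>r\<rfloor>"
  have k0: "k \<ge> 0" using r0 by (simp add: k_def)
  have kr: "real_of_int k \<le> r" "r < real_of_int k + 1" unfolding k_def by linarith+
  have ik: "real (idx L N t) = real_of_int k" unfolding idx_def r_def[symmetric] k_def[symmetric] using k0 by simp
  show "idx L N t < N" using ik kr rN by linarith
  have tr: "t = r * (L / real N)" using Npos L by (simp add: r_def field_simps)
  have tk: "tau L N (idx L N t) = real_of_int k * (L / real N)" unfolding tau_def ik ..
  have "real_of_int k * (L / real N) \<le> r * (L / real N)" using kr L Npos
    by (intro mult_right_mono) simp_all
  thus "tau L N (idx L N t) \<le> t" using tk tr by simp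
  have "t - tau L N (idx L N t) = t - real_of_int k * (L / real N)" by (simp only: tk)
  also have "\<dots> = (r - real_of_int k) * (L / real N)" using tr by (simp add: left_diff_distrib diff_divide_distrib)
  finally have "t - tau L N (idx L N t) = (r - real_of_int k) * (L / real N)" .
  also have "\<dots> < 1 * (L / real N)" using kr L Npos by (intro mult_strict_right_mono) simp_all
  finally show "t - tau L N (idx L N t) < L / real N" by simp
  fix n assume n: "n < N"
  have iff: "n = idx L N t \<longleftrightarrow> real n \<le> r \<and> r < real n + 1"
  proof
    assume "n = idx L N t" thus "real n \<le> r \<and> r < real n + 1" using ik kr by simp
  next
    assume a: "real n \<le> r \<and> r < real n + 1"
    hence "k = int n" unfolding k_def by (intro floor_unique) simp_all
    thus "n = idx L N t" unfolding idx_def r_def[symmetric] k_def[symmetric] by simp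
  qed
  have s: "L / real N > 0" using L Npos by simp
  have c1: "t < L / real N \<longleftrightarrow> r < 1" using s Npos L unfolding r_def by (simp add: field_simps)
  have c2: "real n * (L / real N) \<le> t \<longleftrightarrow> real n \<le> r" using s Npos L unfolding r_def by (simp add: field_simps)
  have c3: "t < (real n + 1) * (L / real N) \<longleftrightarrow> r < real n + 1" using s Npos L unfolding r_def by (simp add: field_simps)
  show "layer_chi L N n t = (if n = idx L N t then 1 else 0)"
  proof (cases "n = 0")
    case True
    thus ?thesis unfolding layer_chi_def Let_def iff using t c1 r0 by (simp add: indicator_def)
  next
    case False
    thus ?thesis unfolding layer_chi_def Let_def iff using c2 c3 by (simp add: indicator_def)
  qed
qed

lemma step_fun_slice:
  assumes L: "L > 0" and N: "N \<ge> 1" and t: "t \<in> {0<..<L}"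
  shows "step_fun L N u (y, t) = u (idx L N t) y"
proof -
  have "step_fun L N u (y, t) = (\<Sum>n<N. (if n = idx L N t then 1 else 0) *\<^sub>R u n y)"
    unfolding step_fun_def using idx_facts(4)[OF L N t] by (intro sum.cong) simp_all
  also have "\<dots> = u (idx L N t) y" using idx_facts(1)[OF L N t]
    by (simp add: if_distrib[of "\<lambda>c. c *\<^sub>R _"] sum.delta cong: if_cong)
  finally show ?thesis .
qed

lemma layer_chi_meas: "layer_chi L N n \<in> borel_measurable lborel"
  unfolding layer_chi_def[abs_def] Let_def by (cases "n = 0") simp_all

lemma cyl_ind: "indicator (cyl \<Omega> L) (y, t) = (indicator \<Omega> y * indicator {0<..<L} t :: real)"
  unfolding cyl_def by (simp add: indicator_def)

lemma RS_step_fun: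
  "RS (cyl \<Omega> L) (step_fun L N u) x =
     (\<Sum>n<N. (indicator {0<..<L} (snd x) * layer_chi L N n (snd x)) *\<^sub>R RS \<Omega> (u n) (fst x))"
proof -
  obtain y t where x: "x = (y, t)" by (cases x)
  show ?thesis unfolding x RS_def step_fun_def cyl_ind scaleR_sum_right
    by (intro sum.cong) (simp_all add: algebra_simps)
qed

lemma RS_step_meas:
  assumes "\<And>n. RS \<Omega> (u n) \<in> borel_measurable lborel"
  shows "RS (cyl \<Omega> L) (step_fun L N u) \<in> borel_measurable lborel"
proof -
  have "(\<lambda>x::(real^2) \<times> real. \<Sum>n<N. (indicator {0<..<L} (snd x) * layer_chi L N n (snd x)) *\<^sub>R RS \<Omega> (u n) (fst x))
      \<in> borel_measurable (lborel \<Otimes>\<^sub>M lborel)"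
  proof (intro borel_measurable_sum borel_measurable_scaleR borel_measurable_times)
    fix n
    show "(\<lambda>x::(real^2) \<times> real. indicator {0<..<L} (snd x) :: real) \<in> borel_measurable (lborel \<Otimes>\<^sub>M lborel)"
      by measurable
    show "(\<lambda>x::(real^2) \<times> real. layer_chi L N n (snd x)) \<in> borel_measurable (lborel \<Otimes>\<^sub>M lborel)"
      by (rule measurable_compose[OF measurable_snd layer_chi_meas[of L N n]])
    show "(\<lambda>x::(real^2) \<times> real. RS \<Omega> (u n) (fst x)) \<in> borel_measurable (lborel \<Otimes>\<^sub>M lborel)"
      by (rule measurable_compose[OF measurable_fst assms[of n]])
  qed
  thus ?thesis unfolding RS_step_fun[abs_def] by (simp add: lborel_prod)
qed

lemma L2M_RS_bdd2:
  fixes f :: "'a::euclidean_space \<Rightarrow> 'b::euclidean_space"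
  assumes m: "RS S f \<in> borel_measurable lborel" and C: "\<And>x. x \<in> S \<Longrightarrow> norm (f x) \<le> C"
    and S: "S \<in> sets lborel" "emeasure lborel S < \<infinity>"
  shows "L2M lborel (RS S f) \<and> nsq lborel (RS S f) \<le> C\<^sup>2 * measure lborel S"
proof -
  have bnd: "(norm (RS S f x))\<^sup>2 \<le> C\<^sup>2 * indicator S x" for x
  proof (cases "x \<in> S")
    case True
    have "0 \<le> norm (f x)" by simp
    hence "(norm (f x))\<^sup>2 \<le> C\<^sup>2" using C[OF True] by (intro power_mono) simp_all
    thus ?thesis using True by simp
  qed simp
  have ii: "integrable lborel (\<lambda>x. C\<^sup>2 * indicator S x)"
    using S by (intro integrable_mult_right integrable_real_indicator) auto
  have int: "integrable lborel (\<lambda>x. (norm (RS S f x))\<^sup>2)"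
  proof (rule Bochner_Integration.integrable_bound[OF ii])
    show "(\<lambda>x. (norm (RS S f x))\<^sup>2) \<in> borel_measurable lborel" using m by simp
    show "AE x in lborel. norm ((norm (RS S f x))\<^sup>2) \<le> norm (C\<^sup>2 * indicator S x)"
      using bnd by (intro AE_I2) (simp add: abs_le_iff order_trans[OF _ bnd])
  qed
  have "nsq lborel (RS S f) \<le> (\<integral>x. C\<^sup>2 * indicator S x \<partial>lborel)"
    unfolding nsq_def by (rule integral_mono[OF int ii bnd])
  also have "\<dots> = C\<^sup>2 * measure lborel S" using S by simp
  finally show ?thesis using int m by (simp add: L2M_def)
qed


locale msetup =
  fixes \<Omega> :: "(real^2) set" and L :: real and v :: "(real^2) \<times> real \<Rightarrow> real^2"
    and v1n v2n :: "nat \<Rightarrow> nat \<Rightarrow> real^2 \<Rightarrow> real^2"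
  assumes op: "open \<Omega>" and bd: "bounded \<Omega>" and Lpos: "L > 0"
    and vc: "continuous_on (closure \<Omega> \<times> {0..L}) v"
    and dec: "\<And>N n. 1 \<le> N \<Longrightarrow> n < N \<Longrightarrow>
        v1n N n \<in> Fspace \<Omega> \<and> v2n N n \<in> Gspace \<Omega> \<and>
        (AE y in lborel. y \<in> \<Omega> \<longrightarrow> v1n N n y + v2n N n y = v (y, real n * (L / real N)))"
begin

definition vs :: "real \<Rightarrow> real^2 \<Rightarrow> real^2" where "vs t = RS \<Omega> (\<lambda>y. v (y, t))"
definition A :: "nat \<Rightarrow> nat \<Rightarrow> real^2 \<Rightarrow> real^2" where "A N n = RS \<Omega> (v1n N n)"
definition B :: "nat \<Rightarrow> nat \<Rightarrow> real^2 \<Rightarrow> real^2" where "B N n = RS \<Omega> (v2n N n)"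
definition mu :: real where "mu = measure lborel \<Omega>"

lemma Osets: "\<Omega> \<in> sets lborel" "emeasure lborel \<Omega> < \<infinity>"
  using bounded_open_sets[OF op bd] by auto

lemma mu_nonneg: "mu \<ge> 0" by (simp add: mu_def)

lemma cpt: "compact (closure \<Omega> \<times> {0..L})"
  using bd by (intro compact_Times) (simp_all add: compact_closure)

lemma vbound_ex: "\<exists>K\<ge>0. \<forall>y\<in>closure \<Omega>. \<forall>t\<in>{0..L}. norm (v (y, t)) \<le> K"
proof -
  have "compact (v ` (closure \<Omega> \<times> {0..L}))" by (rule compact_continuous_image[OF vc cpt])
  hence "bounded (v ` (closure \<Omega> \<times> {0..L}))" by (rule compact_imp_bounded)
  then obtain K where K: "\<And>z. z \<in> v ` (closure \<Omega> \<times> {0..L}) \<Longrightarrow> norm z \<le> K"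
    unfolding bounded_iff by auto
  have "\<forall>y\<in>closure \<Omega>. \<forall>t\<in>{0..L}. norm (v (y, t)) \<le> max K 0"
  proof (intro ballI)
    fix y t assume "y \<in> closure \<Omega>" "t \<in> {0..L}"
    hence "v (y, t) \<in> v ` (closure \<Omega> \<times> {0..L})" by blast
    hence "norm (v (y, t)) \<le> K" by (rule K)
    thus "norm (v (y, t)) \<le> max K 0" by simp
  qed
  thus ?thesis by (intro exI[of _ "max K 0"]) simp
qed

definition Kb :: real where "Kb = (SOME K. K \<ge> 0 \<and> (\<forall>y\<in>closure \<Omega>. \<forall>t\<in>{0..L}. norm (v (y, t)) \<le> K))"

lemma Kb: "Kb \<ge> 0" "\<And>y t. y \<in> closure \<Omega> \<Longrightarrow> t \<in> {0..L} \<Longrightarrow> norm (v (y, t)) \<le> Kb"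
proof -
  have "Kb \<ge> 0 \<and> (\<forall>y\<in>closure \<Omega>. \<forall>t\<in>{0..L}. norm (v (y, t)) \<le> Kb)"
    unfolding Kb_def using vbound_ex by (rule someI_ex)
  thus "Kb \<ge> 0" "\<And>y t. y \<in> closure \<Omega> \<Longrightarrow> t \<in> {0..L} \<Longrightarrow> norm (v (y, t)) \<le> Kb" by auto
qed

lemma slice_cont: "t \<in> {0..L} \<Longrightarrow> continuous_on \<Omega> (\<lambda>y. v (y, t))"
proof -
  assume t: "t \<in> {0..L}"
  have "continuous_on \<Omega> (\<lambda>y. (y, t))" by (intro continuous_intros)
  moreover have "(\<lambda>y. (y, t)) ` \<Omega> \<subseteq> closure \<Omega> \<times> {0..L}" using t closure_subset by auto
  ultimately show ?thesis using continuous_on_compose2[OF vc] by blast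
qed

lemma vs_L2: assumes t: "t \<in> {0..L}"
  shows "L2M lborel (vs t)" "nsq lborel (vs t) \<le> Kb\<^sup>2 * mu"
proof -
  have m: "RS \<Omega> (\<lambda>y. v (y, t)) \<in> borel_measurable lborel"
    unfolding RS_def[abs_def] using borel_measurable_continuous_on_indicator[OF _ slice_cont[OF t]] op
    by simp
  have "L2M lborel (vs t) \<and> nsq lborel (vs t) \<le> Kb\<^sup>2 * mu"
    unfolding vs_def mu_def
    by (rule L2M_RS_bdd2[OF m _ Osets]) (use Kb(2) t closure_subset in blast)
  thus "L2M lborel (vs t)" "nsq lborel (vs t) \<le> Kb\<^sup>2 * mu" by auto
qed

lemma modulus:
  assumes e: "e > 0"
  shows "\<exists>d>0. \<forall>t\<in>{0..L}. \<forall>t'\<in>{0..L}. \<bar>t - t'\<bar> < d \<longrightarrow> nsq lborel (\<lambda>y. vs t y - vs t' y) \<le> e"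
proof -
  define \<eta> where "\<eta> = sqrt (e / (mu + 1))"
  have \<eta>: "\<eta> > 0" using e mu_nonneg by (simp add: \<eta>_def add_nonneg_pos)
  have \<eta>2: "\<eta>\<^sup>2 * mu \<le> e"
  proof -
    have "\<eta>\<^sup>2 = e / (mu + 1)" unfolding \<eta>_def using e mu_nonneg by simp
    hence "\<eta>\<^sup>2 * mu = e * (mu / (mu + 1))" by simp
    also have "\<dots> \<le> e * 1" using e mu_nonneg by (intro mult_left_mono) simp_all
    finally show ?thesis by simp
  qed
  have "uniformly_continuous_on (closure \<Omega> \<times> {0..L}) v"
    by (rule compact_uniformly_continuous[OF vc cpt])
  then obtain d where d: "d > 0" and dd: "\<And>x x'. x \<in> closure \<Omega> \<times> {0..L} \<Longrightarrow> x' \<in> closure \<Omega> \<times> {0..L} \<Longrightarrow>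
      dist x' x < d \<Longrightarrow> dist (v x') (v x) < \<eta>"
    unfolding uniformly_continuous_on_def using \<eta> by metis
  have "\<forall>t\<in>{0..L}. \<forall>t'\<in>{0..L}. \<bar>t - t'\<bar> < d \<longrightarrow> nsq lborel (\<lambda>y. vs t y - vs t' y) \<le> e"
  proof (intro ballI impI)
    fix t t' assume t: "t \<in> {0..L}" and t': "t' \<in> {0..L}" and tt: "\<bar>t - t'\<bar> < d"
    have m: "RS \<Omega> (\<lambda>y. v (y, t) - v (y, t')) \<in> borel_measurable lborel"
    proof -
      have cc: "continuous_on \<Omega> (\<lambda>y. v (y, t) - v (y, t'))"
        by (intro continuous_on_diff slice_cont t t')
      show ?thesis unfolding RS_def[abs_def] using borel_measurable_continuous_on_indicator[OF _ cc] op by simp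
    qed
    have bnd: "norm (v (y, t) - v (y, t')) \<le> \<eta>" if y: "y \<in> \<Omega>" for y
    proof -
      have "dist (v (y, t)) (v (y, t')) < \<eta>"
        using dd[of "(y, t')" "(y, t)"] y t t' tt closure_subset by (auto simp: dist_Pair_Pair dist_real_def)
      thus ?thesis by (simp add: dist_norm)
    qed
    have "nsq lborel (RS \<Omega> (\<lambda>y. v (y, t) - v (y, t'))) \<le> \<eta>\<^sup>2 * mu"
      using L2M_RS_bdd2[OF m bnd Osets] unfolding mu_def by blast
    moreover have "(\<lambda>y. vs t y - vs t' y) = RS \<Omega> (\<lambda>y. v (y, t) - v (y, t'))"
      unfolding vs_def RS_def by (simp add: algebra_simps)
    ultimately show "nsq lborel (\<lambda>y. vs t y - vs t' y) \<le> e" using \<eta>2 by simp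
  qed
  thus ?thesis using d by blast
qed

end


context msetup begin

lemma decomp:
  assumes N: "1 \<le> N" and n: "n < N"
  shows "L2M lborel (A N n)" "L2M lborel (B N n)"
    "AE y in lborel. A N n y + B N n y = vs (tau L N n) y"
    "tau L N n \<in> {0..L}" "v1n N n \<in> Fspace \<Omega>" "v2n N n \<in> Gspace \<Omega>"
proof -
  note d = dec[OF N n]
  show F: "v1n N n \<in> Fspace \<Omega>" and G: "v2n N n \<in> Gspace \<Omega>" using d by auto
  show "L2M lborel (A N n)" using F unfolding A_def Fspace_def L2_iff by blast
  show "L2M lborel (B N n)" using G unfolding B_def Gspace_def L2_iff by blast
  show "AE y in lborel. A N n y + B N n y = vs (tau L N n) y"
    using d[THEN conjunct2, THEN conjunct2]
    by (rule AE_mp) (intro AE_I2 impI, simp add: A_def B_def vs_def RS_def tau_def indicator_def)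
  have "real n \<le> real N" using n by simp
  hence "real n * (L / real N) \<le> real N * (L / real N)" using Lpos by (intro mult_right_mono) simp_all
  also have "\<dots> = L" using N by simp
  finally show "tau L N n \<in> {0..L}" using Lpos unfolding tau_def by simp
qed

lemma orthAB:
  assumes "1 \<le> N" "n < N" "1 \<le> N'" "n' < N'"
  shows "ipM lborel (A N n) (B N' n') = 0"
  unfolding A_def B_def by (rule FG_orth[OF op bd decomp(5)[OF assms(1,2)] decomp(6)[OF assms(3,4)]])

lemma stab:
  assumes N: "1 \<le> N" "n < N" and N': "1 \<le> N'" "n' < N'"
  shows "nsq lborel (\<lambda>y. A N n y - A N' n' y) \<le> nsq lborel (\<lambda>y. vs (tau L N n) y - vs (tau L N' n') y)"
proof -
  note a = decomp(1)[OF N] and a' = decomp(1)[OF N'] and b = decomp(2)[OF N] and b' = decomp(2)[OF N']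
  define da where "da y = A N n y - A N' n' y" for y
  define db where "db y = B N n y - B N' n' y" for y
  have da: "L2M lborel da" unfolding da_def by (rule L2M_diff[OF a a'])
  have db: "L2M lborel db" unfolding db_def by (rule L2M_diff[OF b b'])
  have "ipM lborel da db = (ipM lborel (A N n) (B N n) - ipM lborel (A N n) (B N' n'))
      - (ipM lborel (A N' n') (B N n) - ipM lborel (A N' n') (B N' n'))"
    unfolding da_def db_def ipM_diff_left[OF a a' db[unfolded db_def]] ipM_diff_right[OF b b' a] ipM_diff_right[OF b b' a'] ..
  also have "\<dots> = 0" using orthAB N N' by simp
  finally have ip0: "ipM lborel da db = 0" .
  have "nsq lborel (\<lambda>y. da y + db y) = nsq lborel da + nsq lborel db" using nsq_add[OF da db] ip0 by simp
  moreover have "nsq lborel (\<lambda>y. da y + db y) = nsq lborel (\<lambda>y. vs (tau L N n) y - vs (tau L N' n') y)"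
  proof (rule nsq_cong_AE)
    show "(\<lambda>y. da y + db y) \<in> borel_measurable lborel" using L2M_meas[OF L2M_add[OF da db]] .
    show "(\<lambda>y. vs (tau L N n) y - vs (tau L N' n') y) \<in> borel_measurable lborel"
      using L2M_meas[OF L2M_diff[OF vs_L2(1)[OF decomp(4)[OF N]] vs_L2(1)[OF decomp(4)[OF N']]]] .
    show "AE y in lborel. da y + db y = vs (tau L N n) y - vs (tau L N' n') y"
    proof -
      have "AE y in lborel. (A N n y + B N n y = vs (tau L N n) y) \<and> (A N' n' y + B N' n' y = vs (tau L N' n') y)"
        using decomp(3)[OF N] decomp(3)[OF N'] by (rule AE_conjI)
      thus ?thesis
      proof (rule AE_mp, intro AE_I2 impI)
        fix y assume h: "(A N n y + B N n y = vs (tau L N n) y) \<and> (A N' n' y + B N' n' y = vs (tau L N' n') y)"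
        have "da y + db y = (A N n y + B N n y) - (A N' n' y + B N' n' y)"
          unfolding da_def db_def by (simp add: algebra_simps)
        thus "da y + db y = vs (tau L N n) y - vs (tau L N' n') y" using h by simp
      qed
    qed
  qed
  ultimately show ?thesis using nsq_nonneg[of lborel db] unfolding da_def by linarith
qed

lemma pyth:
  assumes N: "1 \<le> N" "n < N"
  shows "nsq lborel (A N n) \<le> Kb\<^sup>2 * mu"
proof -
  note a = decomp(1)[OF N] and b = decomp(2)[OF N]
  have "nsq lborel (\<lambda>y. A N n y + B N n y) = nsq lborel (A N n) + nsq lborel (B N n)"
    using nsq_add[OF a b] orthAB[OF N N] by simp
  moreover have "nsq lborel (\<lambda>y. A N n y + B N n y) = nsq lborel (vs (tau L N n))"
    by (rule nsq_cong_AE[OF L2M_meas[OF L2M_add[OF a b]] L2M_meas[OF vs_L2(1)[OF decomp(4)[OF N]]] decomp(3)[OF N]])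
  ultimately show ?thesis using nsq_nonneg[of lborel "B N n"] vs_L2(2)[OF decomp(4)[OF N]] by linarith
qed

end


context msetup begin

definition df :: "real \<Rightarrow> real" where
  "df e = (SOME d. d > 0 \<and> (\<forall>t\<in>{0..L}. \<forall>t'\<in>{0..L}. \<bar>t - t'\<bar> < d \<longrightarrow> nsq lborel (\<lambda>y. vs t y - vs t' y) \<le> e))"

lemma df: assumes "e > 0"
  shows "df e > 0" "\<And>t t'. t \<in> {0..L} \<Longrightarrow> t' \<in> {0..L} \<Longrightarrow> \<bar>t - t'\<bar> < df e \<Longrightarrow> nsq lborel (\<lambda>y. vs t y - vs t' y) \<le> e"
proof -
  have "df e > 0 \<and> (\<forall>t\<in>{0..L}. \<forall>t'\<in>{0..L}. \<bar>t - t'\<bar> < df e \<longrightarrow> nsq lborel (\<lambda>y. vs t y - vs t' y) \<le> e)"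
    unfolding df_def using modulus[OF assms] by (rule someI_ex)
  thus "df e > 0" "\<And>t t'. t \<in> {0..L} \<Longrightarrow> t' \<in> {0..L} \<Longrightarrow> \<bar>t - t'\<bar> < df e \<Longrightarrow> nsq lborel (\<lambda>y. vs t y - vs t' y) \<le> e"
    by auto
qed

definition ee :: "nat \<Rightarrow> real" where "ee j = (1/4)^j"
definition dmin :: "nat \<Rightarrow> real" where "dmin k = Min ((\<lambda>i. df (ee i)) ` {..k})"
definition Nj :: "nat \<Rightarrow> nat" where "Nj k = nat \<lceil>2 * L / dmin k\<rceil> + k + 1"
definition Sj :: "nat \<Rightarrow> real \<Rightarrow> real^2 \<Rightarrow> real^2" where "Sj k t = A (Nj k) (idx L (Nj k) t)"
definition tj :: "nat \<Rightarrow> real \<Rightarrow> real" where "tj k t = tau L (Nj k) (idx L (Nj k) t)"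

lemma ee_pos: "ee j > 0" by (simp add: ee_def)

lemma dmin_pos: "dmin k > 0"
  unfolding dmin_def using df(1)[OF ee_pos] by (subst Min_gr_iff) auto

lemma dmin_le: "j \<le> k \<Longrightarrow> dmin k \<le> df (ee j)"
  unfolding dmin_def by (intro Min_le) auto

lemma Nj_ge1: "Nj k \<ge> 1" by (simp add: Nj_def)

lemma Nj_small: "L / real (Nj k) < dmin k / 2" "L / real (Nj k) \<le> L / real (Suc k)"
proof -
  have d: "dmin k > 0" by (rule dmin_pos)
  have "real (Nj k) \<ge> 2 * L / dmin k + real k + 1"
    unfolding Nj_def using real_nat_ceiling_ge[of "2 * L / dmin k"] by simp
  hence gt: "real (Nj k) > 2 * L / dmin k" by simp
  have pos: "2 * L / dmin k > 0" using d Lpos by simp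
  have "L / real (Nj k) < L / (2 * L / dmin k)"
  proof (rule divide_strict_left_mono[OF gt Lpos])
    have "real (Nj k) > 0" using Nj_ge1[of k] by simp
    thus "0 < real (Nj k) * (2 * L / dmin k)" using pos by (rule mult_pos_pos)
  qed
  also have "\<dots> = dmin k / 2" using Lpos d by (simp add: field_simps)
  finally show "L / real (Nj k) < dmin k / 2" .
  have "real (Suc k) \<le> real (Nj k)" unfolding Nj_def by simp
  thus "L / real (Nj k) \<le> L / real (Suc k)" using Lpos by (intro divide_left_mono) simp_all
qed

lemma tj_facts:
  assumes t: "t \<in> {0<..<L}"
  shows "tj k t \<in> {0..L}" "\<bar>tj k t - t\<bar> < L / real (Nj k)" "idx L (Nj k) t < Nj k"
proof -
  note f = idx_facts[OF Lpos Nj_ge1 t, of k]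
  show "idx L (Nj k) t < Nj k" by (rule f(1))
  show "tj k t \<in> {0..L}" unfolding tj_def by (rule decomp(4)[OF Nj_ge1 f(1)])
  show "\<bar>tj k t - t\<bar> < L / real (Nj k)" unfolding tj_def using f(2) f(3) by linarith
qed

lemma Sj_L2: "t \<in> {0<..<L} \<Longrightarrow> L2M lborel (Sj k t)"
  unfolding Sj_def by (rule decomp(1)[OF Nj_ge1 tj_facts(3)])

lemma Sj_cauchy:
  assumes t: "t \<in> {0<..<L}" and jk: "j \<le> k"
  shows "nsq lborel (\<lambda>y. Sj j t y - Sj k t y) \<le> ee j"
proof -
  have "nsq lborel (\<lambda>y. Sj j t y - Sj k t y) \<le> nsq lborel (\<lambda>y. vs (tj j t) y - vs (tj k t) y)"
    unfolding Sj_def tj_def by (rule stab[OF Nj_ge1 tj_facts(3)[OF t] Nj_ge1 tj_facts(3)[OF t]])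
  also have "\<dots> \<le> ee j"
  proof (rule df(2)[OF ee_pos tj_facts(1)[OF t] tj_facts(1)[OF t]])
    have "\<bar>tj j t - tj k t\<bar> \<le> \<bar>tj j t - t\<bar> + \<bar>tj k t - t\<bar>" by linarith
    also have "\<dots> < dmin j / 2 + dmin k / 2"
      using tj_facts(2)[OF t, of j] tj_facts(2)[OF t, of k] Nj_small(1)[of j] Nj_small(1)[of k] by linarith
    also have "\<dots> \<le> df (ee j) / 2 + df (ee j) / 2" using dmin_le[OF jk] dmin_le[of j j] by simp
    finally show "\<bar>tj j t - tj k t\<bar> < df (ee j)" by simp
  qed
  finally show ?thesis .
qed

definition SD :: "nat \<Rightarrow> (real^2) \<times> real \<Rightarrow> real^2" where
  "SD k = RS (cyl \<Omega> L) (step_fun L (Nj k) (v1n (Nj k)))"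

lemma SD_slice: "t \<in> {0<..<L} \<Longrightarrow> SD k (y, t) = Sj k t y"
  unfolding SD_def Sj_def A_def RS_def cyl_ind using step_fun_slice[OF Lpos Nj_ge1] by (simp add: indicator_def)

lemma SD_out: "t \<notin> {0<..<L} \<Longrightarrow> SD k (y, t) = 0"
  unfolding SD_def RS_def cyl_ind by simp

end


lemma RS_step_meas':
  assumes "\<And>n. n < N \<Longrightarrow> RS \<Omega> (u n) \<in> borel_measurable lborel"
  shows "RS (cyl \<Omega> L) (step_fun L N u) \<in> borel_measurable lborel"
proof -
  have "(\<lambda>x::(real^2) \<times> real. \<Sum>n<N. (indicator {0<..<L} (snd x) * layer_chi L N n (snd x)) *\<^sub>R RS \<Omega> (u n) (fst x))
      \<in> borel_measurable (lborel \<Otimes>\<^sub>M lborel)"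
  proof (intro borel_measurable_sum borel_measurable_scaleR borel_measurable_times)
    fix n assume n: "n \<in> {..<N}"
    show "(\<lambda>x::(real^2) \<times> real. indicator {0<..<L} (snd x) :: real) \<in> borel_measurable (lborel \<Otimes>\<^sub>M lborel)"
      by measurable
    show "(\<lambda>x::(real^2) \<times> real. layer_chi L N n (snd x)) \<in> borel_measurable (lborel \<Otimes>\<^sub>M lborel)"
      by (rule measurable_compose[OF measurable_snd layer_chi_meas[of L N n]])
    show "(\<lambda>x::(real^2) \<times> real. RS \<Omega> (u n) (fst x)) \<in> borel_measurable (lborel \<Otimes>\<^sub>M lborel)"
      using n by (intro measurable_compose[OF measurable_fst assms]) simp
  qed
  thus ?thesis unfolding RS_step_fun[abs_def] by (simp add: lborel_prod)
qed

lemma nsq_commute: "nsq M (\<lambda>x. f x - g x) = nsq M (\<lambda>x. g x - f x)"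
  unfolding nsq_def by (simp add: norm_minus_commute)

context msetup begin

lemma step_meas:
  assumes N: "1 \<le> N"
  shows "RS (cyl \<Omega> L) (step_fun L N (v1n N)) \<in> borel_measurable lborel"
    "RS (cyl \<Omega> L) (step_fun L N (v2n N)) \<in> borel_measurable lborel"
proof -
  show "RS (cyl \<Omega> L) (step_fun L N (v1n N)) \<in> borel_measurable lborel"
    by (rule RS_step_meas') (use L2M_meas[OF decomp(1)[OF N]] in \<open>simp add: A_def\<close>)
  show "RS (cyl \<Omega> L) (step_fun L N (v2n N)) \<in> borel_measurable lborel"
    by (rule RS_step_meas') (use L2M_meas[OF decomp(2)[OF N]] in \<open>simp add: B_def\<close>)
qed

lemma SD_meas: "SD k \<in> borel_measurable lborel"
  unfolding SD_def by (rule step_meas(1)[OF Nj_ge1])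

definition V1 :: "(real^2) \<times> real \<Rightarrow> real^2" where "V1 x = lim (\<lambda>k. SD k x)"

lemma V1_meas: "V1 \<in> borel_measurable lborel"
  unfolding V1_def[abs_def] by (rule borel_measurable_lim_metric[OF SD_meas])

lemma V1_out: "t \<notin> {0<..<L} \<Longrightarrow> V1 (y, t) = 0"
  unfolding V1_def SD_out by (simp add: limI)

lemma V1_slice:
  assumes t: "t \<in> {0<..<L}"
  shows "L2M lborel (\<lambda>y. V1 (y, t))" "\<And>j. nsq lborel (\<lambda>y. Sj j t y - V1 (y, t)) \<le> ee j"
    "\<And>j. L2M lborel (\<lambda>y. Sj j t y - V1 (y, t))"
proof -
  have SL: "\<And>k. L2M lborel (Sj k t)" by (rule Sj_L2[OF t])
  have zero: "\<And>k y. y \<notin> \<Omega> \<Longrightarrow> Sj k t y = 0" unfolding Sj_def A_def by simp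
  have "AE y in lborel. convergent (\<lambda>k. Sj k t y)"
  proof (rule AE_conv_fast[OF SL Osets zero])
    fix k show "nsq lborel (\<lambda>y. Sj (Suc k) t y - Sj k t y) \<le> (1/4)^k"
      using Sj_cauchy[OF t, of k "Suc k"] nsq_commute[of lborel "Sj (Suc k) t" "Sj k t"] by (simp add: ee_def)
  qed
  hence conv: "AE y in lborel. (\<lambda>k. Sj k t y) \<longlonglongrightarrow> V1 (y, t)"
    by (rule AE_mp) (intro AE_I2 impI, simp add: V1_def SD_slice[OF t] convergent_LIMSEQ_iff)
  have hm: "(\<lambda>y. V1 (y, t)) \<in> borel_measurable lborel" by (rule slice_meas[OF V1_meas])
  have F: "L2M lborel (\<lambda>y. Sj j t y - V1 (y, t)) \<and> nsq lborel (\<lambda>y. Sj j t y - V1 (y, t)) \<le> ee j" for j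
    by (rule L2_fatou[OF SL SL hm _ conv]) (rule Sj_cauchy[OF t])
  thus "\<And>j. nsq lborel (\<lambda>y. Sj j t y - V1 (y, t)) \<le> ee j" "\<And>j. L2M lborel (\<lambda>y. Sj j t y - V1 (y, t))"
    by auto
  have "L2M lborel (\<lambda>y. Sj 0 t y - (Sj 0 t y - V1 (y, t)))"
    by (rule L2M_diff[OF SL]) (use F in blast)
  thus "L2M lborel (\<lambda>y. V1 (y, t))" by simp
qed

lemma V1_L2: "L2M lborel V1"
proof (rule prod_L2M[OF V1_meas V1_out _ less_imp_le[OF Lpos]])
  fix t assume t: "t \<in> {0<..<L}"
  have SL: "L2M lborel (Sj 0 t)" by (rule Sj_L2[OF t])
  have "nsq lborel (\<lambda>y. Sj 0 t y - (Sj 0 t y - V1 (y, t))) \<le> 2 * nsq lborel (Sj 0 t) + 2 * nsq lborel (\<lambda>y. Sj 0 t y - V1 (y, t))"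
    by (rule nsq_diff_le[OF SL V1_slice(3)[OF t]])
  also have "\<dots> \<le> 2 * (Kb\<^sup>2 * mu) + 2 * 1"
    using pyth[OF Nj_ge1 tj_facts(3)[OF t, of 0]] V1_slice(2)[OF t, of 0] unfolding Sj_def by (simp add: ee_def)
  finally show "L2M lborel (\<lambda>y. V1 (y, t)) \<and> nsq lborel (\<lambda>y. V1 (y, t)) \<le> 2 * (Kb\<^sup>2 * mu) + 2 * 1"
    using V1_slice(1)[OF t] by simp
qed

end


context msetup begin

lemma ee_lim: "ee \<longlonglongrightarrow> 0"
  unfolding ee_def[abs_def] by (rule LIMSEQ_realpow_zero) simp_all

lemma tj_lim: assumes t: "t \<in> {0<..<L}" shows "(\<lambda>k. tj k t) \<longlonglongrightarrow> t"
proof -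
  have l: "(\<lambda>k. L / real (Suc k)) \<longlonglongrightarrow> 0"
    using LIMSEQ_Suc[OF lim_const_over_n[of L]] by simp
  have "(\<lambda>k. tj k t - t) \<longlonglongrightarrow> 0"
  proof (rule Lim_null_comparison[OF _ l])
    show "\<forall>\<^sub>F k in sequentially. norm (tj k t - t) \<le> L / real (Suc k)"
      using tj_facts(2)[OF t] Nj_small(2) by (intro always_eventually allI) (smt (verit) real_norm_def)
  qed
  hence "(\<lambda>k. tj k t - t + t) \<longlonglongrightarrow> 0 + t" by (intro tendsto_add tendsto_const)
  thus ?thesis by simp
qed

lemma mod_tendsto:
  assumes s: "\<And>k. s k \<in> {0..L}" and t: "t \<in> {0..L}" and lim: "s \<longlonglongrightarrow> t"
  shows "(\<lambda>k. nsq lborel (\<lambda>y. vs t y - vs (s k) y)) \<longlonglongrightarrow> 0"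
proof (rule order_tendstoI)
  fix a :: real assume a: "a < 0"
  have "a < nsq lborel (\<lambda>y. vs t y - vs (s k) y)" for k
    using nsq_nonneg[of lborel "\<lambda>y. vs t y - vs (s k) y"] a by linarith
  thus "\<forall>\<^sub>F k in sequentially. a < nsq lborel (\<lambda>y. vs t y - vs (s k) y)"
    by (intro always_eventually allI)
next
  fix a :: real assume a: "a > 0"
  have d: "df (a/2) > 0" using df(1) a by simp
  have "\<forall>\<^sub>F k in sequentially. dist (s k) t < df (a/2)" using lim d by (rule tendstoD)
  thus "\<forall>\<^sub>F k in sequentially. nsq lborel (\<lambda>y. vs t y - vs (s k) y) < a"
  proof (rule eventually_mono)
    fix k assume "dist (s k) t < df (a/2)"
    hence "\<bar>t - s k\<bar> < df (a/2)" by (simp add: dist_real_def abs_minus_commute)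
    hence "nsq lborel (\<lambda>y. vs t y - vs (s k) y) \<le> a/2" using df(2)[of "a/2" t "s k"] a t s by simp
    thus "nsq lborel (\<lambda>y. vs t y - vs (s k) y) < a" using a by simp
  qed
qed

lemma sandwich0:
  fixes x y z :: "nat \<Rightarrow> real"
  assumes "\<And>k. 0 \<le> x k" "\<And>k. x k \<le> 2 * y k + 2 * z k" "y \<longlonglongrightarrow> 0" "z \<longlonglongrightarrow> 0"
  shows "x \<longlonglongrightarrow> 0"
proof (rule tendsto_sandwich[of "\<lambda>k. 0" x sequentially "\<lambda>k. 2 * y k + 2 * z k"])
  show "\<forall>\<^sub>F k in sequentially. 0 \<le> x k" using assms(1) by simp
  show "\<forall>\<^sub>F k in sequentially. x k \<le> 2 * y k + 2 * z k" using assms(2) by simp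
  have "(\<lambda>k. 2 * y k + 2 * z k) \<longlonglongrightarrow> 2 * 0 + 2 * 0" by (intro tendsto_intros assms(3,4))
  thus "(\<lambda>k. 2 * y k + 2 * z k) \<longlonglongrightarrow> 0" by simp
qed simp

lemma V1_Sj_lim: assumes t: "t \<in> {0<..<L}"
  shows "(\<lambda>k. nsq lborel (\<lambda>y. V1 (y, t) - Sj k t y)) \<longlonglongrightarrow> 0"
proof (rule sandwich0[of _ "\<lambda>k. 0" "\<lambda>k. ee k / 2"])
  fix k show "0 \<le> nsq lborel (\<lambda>y. V1 (y, t) - Sj k t y)" by (rule nsq_nonneg)
  show "nsq lborel (\<lambda>y. V1 (y, t) - Sj k t y) \<le> 2 * 0 + 2 * (ee k / 2)"
    using V1_slice(2)[OF t, of k] nsq_commute[of lborel "\<lambda>y. V1 (y, t)" "Sj k t"] by simp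
  show "(\<lambda>k. ee k / 2) \<longlonglongrightarrow> 0" using tendsto_divide[OF ee_lim tendsto_const, of 2] by simp
qed simp

lemma ortho1:
  assumes t: "t \<in> {0<..<L}" and b: "b \<in> Gspace \<Omega>"
  shows "ipM lborel (\<lambda>y. V1 (y, t)) (RS \<Omega> b) = 0"
proof (rule ipM_zero_by_limit[OF _ Sj_L2[OF t] V1_slice(1)[OF t] V1_Sj_lim[OF t]])
  show "L2M lborel (RS \<Omega> b)" using b unfolding Gspace_def L2_iff by blast
  fix k show "ipM lborel (Sj k t) (RS \<Omega> b) = 0"
    unfolding Sj_def A_def by (rule FG_orth[OF op bd decomp(5)[OF Nj_ge1 tj_facts(3)[OF t]] b])
qed

lemma vD_slice_L2: "t \<in> {0<..<L} \<Longrightarrow> L2M lborel (\<lambda>y. vs t y - V1 (y, t))"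
  by (rule L2M_diff[OF vs_L2(1) V1_slice(1)]) auto

lemma ortho2:
  assumes t: "t \<in> {0<..<L}" and a: "a \<in> Fspace \<Omega>"
  shows "ipM lborel (\<lambda>y. vs t y - V1 (y, t)) (RS \<Omega> a) = 0"
proof -
  define Bk where "Bk k = B (Nj k) (idx L (Nj k) t)" for k
  have BL: "L2M lborel (Bk k)" for k unfolding Bk_def by (rule decomp(2)[OF Nj_ge1 tj_facts(3)[OF t]])
  have aL: "L2M lborel (RS \<Omega> a)" using a unfolding Fspace_def L2_iff by blast
  have t0: "t \<in> {0..L}" using t by simp
  have lim: "(\<lambda>k. nsq lborel (\<lambda>y. (vs t y - V1 (y, t)) - Bk k y)) \<longlonglongrightarrow> 0"
  proof (rule sandwich0[OF nsq_nonneg _ mod_tendsto[OF tj_facts(1)[OF t] t0 tj_lim[OF t]] V1_Sj_lim[OF t]])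
    fix k
    have e: "nsq lborel (\<lambda>y. (vs t y - V1 (y, t)) - Bk k y)
        = nsq lborel (\<lambda>y. (vs t y - vs (tj k t) y) - (V1 (y, t) - Sj k t y))"
    proof (rule nsq_cong_AE)
      show "(\<lambda>y. vs t y - V1 (y, t) - Bk k y) \<in> borel_measurable lborel"
        by (rule L2M_meas[OF L2M_diff[OF vD_slice_L2[OF t] BL]])
      show "(\<lambda>y. vs t y - vs (tj k t) y - (V1 (y, t) - Sj k t y)) \<in> borel_measurable lborel"
        by (rule L2M_meas[OF L2M_diff[OF L2M_diff[OF vs_L2(1)[OF t0] vs_L2(1)[OF tj_facts(1)[OF t]]]
              L2M_diff[OF V1_slice(1)[OF t] Sj_L2[OF t]]]])
      show "AE y in lborel. vs t y - V1 (y, t) - Bk k y = vs t y - vs (tj k t) y - (V1 (y, t) - Sj k t y)"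
        using decomp(3)[OF Nj_ge1 tj_facts(3)[OF t, of k]]
      proof (rule AE_mp, intro AE_I2 impI)
        fix y assume "A (Nj k) (idx L (Nj k) t) y + B (Nj k) (idx L (Nj k) t) y = vs (tau L (Nj k) (idx L (Nj k) t)) y"
        thus "vs t y - V1 (y, t) - Bk k y = vs t y - vs (tj k t) y - (V1 (y, t) - Sj k t y)"
          unfolding Bk_def tj_def Sj_def by (simp add: algebra_simps)
      qed
    qed
    show "nsq lborel (\<lambda>y. vs t y - V1 (y, t) - Bk k y)
        \<le> 2 * nsq lborel (\<lambda>y. vs t y - vs (tj k t) y) + 2 * nsq lborel (\<lambda>y. V1 (y, t) - Sj k t y)"
      unfolding e
      by (rule nsq_diff_le[OF L2M_diff[OF vs_L2(1)[OF t0] vs_L2(1)[OF tj_facts(1)[OF t]]]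
              L2M_diff[OF V1_slice(1)[OF t] Sj_L2[OF t]]])
  qed
  show ?thesis
  proof (rule ipM_zero_by_limit[OF aL BL vD_slice_L2[OF t] lim])
    fix k
    have "ipM lborel (RS \<Omega> a) (Bk k) = 0"
      unfolding Bk_def B_def by (rule FG_orth[OF op bd a decomp(6)[OF Nj_ge1 tj_facts(3)[OF t]]])
    thus "ipM lborel (Bk k) (RS \<Omega> a) = 0" by (simp add: ipM_commute)
  qed
qed

lemma ortho3:
  assumes t: "t \<in> {0<..<L}"
  shows "ipM lborel (\<lambda>y. V1 (y, t)) (\<lambda>y. vs t y - V1 (y, t)) = 0"
proof (rule ipM_zero_by_limit[OF vD_slice_L2[OF t] Sj_L2[OF t] V1_slice(1)[OF t] V1_Sj_lim[OF t]])
  fix k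
  have "ipM lborel (\<lambda>y. vs t y - V1 (y, t)) (Sj k t) = 0"
    unfolding Sj_def A_def by (rule ortho2[OF t decomp(5)[OF Nj_ge1 tj_facts(3)[OF t]]])
  thus "ipM lborel (Sj k t) (\<lambda>y. vs t y - V1 (y, t)) = 0" by (simp add: ipM_commute)
qed

end


context msetup begin

definition vD :: "(real^2) \<times> real \<Rightarrow> real^2" where "vD = RS (cyl \<Omega> L) v"
definition V2 :: "(real^2) \<times> real \<Rightarrow> real^2" where "V2 x = vD x - V1 x"

lemma vD_slice: "t \<in> {0<..<L} \<Longrightarrow> vD (y, t) = vs t y" "t \<notin> {0<..<L} \<Longrightarrow> vD (y, t) = 0"
  unfolding vD_def vs_def RS_def cyl_ind by simp_all

lemma cyl_open: "open (cyl \<Omega> L)" unfolding cyl_def by (intro open_Times op) simp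

lemma cyl_sub: "cyl \<Omega> L \<subseteq> closure \<Omega> \<times> {0..L}" unfolding cyl_def using closure_subset by auto

lemma vD_L2: "L2M lborel vD"
proof -
  have cb: "bounded (cyl \<Omega> L)" unfolding cyl_def using bd by (intro bounded_Times) simp_all
  have c: "continuous_on (cyl \<Omega> L) v" by (rule continuous_on_subset[OF vc cyl_sub])
  have m: "RS (cyl \<Omega> L) v \<in> borel_measurable lborel"
    unfolding RS_def[abs_def] using borel_measurable_continuous_on_indicator[OF _ c] cyl_open by simp
  have "L2M lborel (RS (cyl \<Omega> L) v) \<and> nsq lborel (RS (cyl \<Omega> L) v) \<le> Kb\<^sup>2 * measure lborel (cyl \<Omega> L)"
  proof (rule L2M_RS_bdd2[OF m])
    fix x assume "x \<in> cyl \<Omega> L"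
    hence "x \<in> closure \<Omega> \<times> {0..L}" using cyl_sub by blast
    thus "norm (v x) \<le> Kb" using Kb(2) by (cases x) auto
  qed (use bounded_open_sets[OF cyl_open cb] in auto)
  thus ?thesis unfolding vD_def by blast
qed

lemma V2_L2: "L2M lborel V2"
  unfolding V2_def[abs_def] by (rule L2M_diff[OF vD_L2 V1_L2])

lemma V1_zero: "x \<notin> cyl \<Omega> L \<Longrightarrow> V1 x = 0"
proof -
  assume x: "x \<notin> cyl \<Omega> L"
  obtain y t where xy: "x = (y, t)" by (cases x)
  show "V1 x = 0"
  proof (cases "t \<in> {0<..<L}")
    case True
    hence y: "y \<notin> \<Omega>" using x xy unfolding cyl_def by auto
    have "V1 (y, t) = lim (\<lambda>k. (0::real^2))"
      unfolding V1_def SD_slice[OF True] Sj_def A_def using y by simp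
    thus ?thesis using xy by (simp add: limI)
  next
    case False thus ?thesis using xy V1_out by simp
  qed
qed

lemma RS_V1: "RS (cyl \<Omega> L) V1 = V1"
  by (rule ext) (simp add: RS_def indicator_def V1_zero)

lemma RS_V2: "RS (cyl \<Omega> L) V2 = V2"
  by (rule ext) (simp add: RS_def indicator_def V2_def V1_zero vD_def)

lemma V2_slice: "t \<in> {0<..<L} \<Longrightarrow> (\<lambda>y. V2 (y, t)) = (\<lambda>y. vs t y - V1 (y, t))"
  unfolding V2_def by (simp add: vD_slice)

lemma V1_slice0: "t \<notin> {0<..<L} \<Longrightarrow> (\<lambda>y. V1 (y, t)) = (\<lambda>y. 0)"
  using V1_out by auto

lemma RS_step_slice:
  assumes N: "1 \<le> N"
  shows "t \<in> {0<..<L} \<Longrightarrow> RS (cyl \<Omega> L) (step_fun L N u) (y, t) = RS \<Omega> (u (idx L N t)) y"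
    "t \<notin> {0<..<L} \<Longrightarrow> RS (cyl \<Omega> L) (step_fun L N u) (y, t) = 0"
  unfolding RS_def cyl_ind using step_fun_slice[OF Lpos N] by (simp_all add: indicator_def)

lemma step_L2:
  assumes N: "1 \<le> N"
  shows "L2M lborel (RS (cyl \<Omega> L) (step_fun L N (v1n N)))" "L2M lborel (RS (cyl \<Omega> L) (step_fun L N (v2n N)))"
proof -
  show "L2M lborel (RS (cyl \<Omega> L) (step_fun L N (v1n N)))"
  proof (rule prod_L2M[OF step_meas(1)[OF N] RS_step_slice(2)[OF N] _ less_imp_le[OF Lpos]])
    fix t assume t: "t \<in> {0<..<L}"
    have e: "(\<lambda>y. RS (cyl \<Omega> L) (step_fun L N (v1n N)) (y, t)) = A N (idx L N t)"
      unfolding A_def using RS_step_slice(1)[OF N t] by auto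
    show "L2M lborel (\<lambda>y. RS (cyl \<Omega> L) (step_fun L N (v1n N)) (y, t)) \<and>
          nsq lborel (\<lambda>y. RS (cyl \<Omega> L) (step_fun L N (v1n N)) (y, t)) \<le> Kb\<^sup>2 * mu"
      unfolding e using decomp(1)[OF N idx_facts(1)[OF Lpos N t]] pyth[OF N idx_facts(1)[OF Lpos N t]] by simp
  qed
  show "L2M lborel (RS (cyl \<Omega> L) (step_fun L N (v2n N)))"
  proof (rule prod_L2M[OF step_meas(2)[OF N] RS_step_slice(2)[OF N] _ less_imp_le[OF Lpos]])
    fix t assume t: "t \<in> {0<..<L}"
    note n = idx_facts(1)[OF Lpos N t]
    have e: "(\<lambda>y. RS (cyl \<Omega> L) (step_fun L N (v2n N)) (y, t)) = B N (idx L N t)"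
      unfolding B_def using RS_step_slice(1)[OF N t] by auto
    have "nsq lborel (\<lambda>y. A N (idx L N t) y + B N (idx L N t) y) = nsq lborel (A N (idx L N t)) + nsq lborel (B N (idx L N t))"
      using nsq_add[OF decomp(1)[OF N n] decomp(2)[OF N n]] orthAB[OF N n N n] by simp
    moreover have "nsq lborel (\<lambda>y. A N (idx L N t) y + B N (idx L N t) y) = nsq lborel (vs (tau L N (idx L N t)))"
      by (rule nsq_cong_AE[OF L2M_meas[OF L2M_add[OF decomp(1)[OF N n] decomp(2)[OF N n]]]
            L2M_meas[OF vs_L2(1)[OF decomp(4)[OF N n]]] decomp(3)[OF N n]])
    ultimately have "nsq lborel (B N (idx L N t)) \<le> Kb\<^sup>2 * mu"
      using nsq_nonneg[of lborel "A N (idx L N t)"] vs_L2(2)[OF decomp(4)[OF N n]] by linarith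
    thus "L2M lborel (\<lambda>y. RS (cyl \<Omega> L) (step_fun L N (v2n N)) (y, t)) \<and>
          nsq lborel (\<lambda>y. RS (cyl \<Omega> L) (step_fun L N (v2n N)) (y, t)) \<le> Kb\<^sup>2 * mu"
      unfolding e using decomp(2)[OF N n] by simp
  qed
qed

lemma inner_V1_V2: "ipM lborel V1 V2 = 0"
proof (rule prod_ipM_zero[OF V1_L2 V2_L2])
  fix t show "ipM lborel (\<lambda>y. V1 (y, t)) (\<lambda>y. V2 (y, t)) = 0"
  proof (cases "t \<in> {0<..<L}")
    case True thus ?thesis using ortho3[OF True] V2_slice[OF True] by simp
  next
    case False thus ?thesis unfolding V1_slice0[OF False] ipM_def by simp
  qed
qed

lemma inner_step1_V2: assumes N: "1 \<le> N"
  shows "ipM lborel (RS (cyl \<Omega> L) (step_fun L N (v1n N))) V2 = 0"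
proof (rule prod_ipM_zero[OF step_L2(1)[OF N] V2_L2])
  fix t show "ipM lborel (\<lambda>y. RS (cyl \<Omega> L) (step_fun L N (v1n N)) (y, t)) (\<lambda>y. V2 (y, t)) = 0"
  proof (cases "t \<in> {0<..<L}")
    case True
    note n = idx_facts(1)[OF Lpos N True]
    have "ipM lborel (\<lambda>y. vs t y - V1 (y, t)) (RS \<Omega> (v1n N (idx L N t))) = 0"
      by (rule ortho2[OF True decomp(5)[OF N n]])
    moreover have "(\<lambda>y. RS (cyl \<Omega> L) (step_fun L N (v1n N)) (y, t)) = RS \<Omega> (v1n N (idx L N t))"
      using RS_step_slice(1)[OF N True] by auto
    ultimately show ?thesis using V2_slice[OF True] by (simp add: ipM_commute)
  next
    case False thus ?thesis using RS_step_slice(2)[OF N False] unfolding ipM_def by simp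
  qed
qed

lemma inner_V1_step2: assumes N: "1 \<le> N"
  shows "ipM lborel V1 (RS (cyl \<Omega> L) (step_fun L N (v2n N))) = 0"
proof (rule prod_ipM_zero[OF V1_L2 step_L2(2)[OF N]])
  fix t show "ipM lborel (\<lambda>y. V1 (y, t)) (\<lambda>y. RS (cyl \<Omega> L) (step_fun L N (v2n N)) (y, t)) = 0"
  proof (cases "t \<in> {0<..<L}")
    case True
    note n = idx_facts(1)[OF Lpos N True]
    have "(\<lambda>y. RS (cyl \<Omega> L) (step_fun L N (v2n N)) (y, t)) = RS \<Omega> (v2n N (idx L N t))"
      using RS_step_slice(1)[OF N True] by auto
    thus ?thesis using ortho1[OF True decomp(6)[OF N n]] by simp
  next
    case False thus ?thesis unfolding V1_slice0[OF False] ipM_def by simp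
  qed
qed

end


context msetup begin

lemma conv_slices:
  assumes e: "e > 0"
  shows "\<exists>N0\<ge>1. \<forall>N\<ge>N0. \<forall>t\<in>{0<..<L}. nsq lborel (\<lambda>y. A N (idx L N t) y - V1 (y, t)) \<le> e \<and>
            nsq lborel (\<lambda>y. vs (tau L N (idx L N t)) y - vs t y) \<le> e"
proof -
  define e4 where "e4 = e / 4"
  have e4: "e4 > 0" using e by (simp add: e4_def)
  define \<delta> where "\<delta> = df e4"
  have \<delta>: "\<delta> > 0" unfolding \<delta>_def by (rule df(1)[OF e4])
  have l: "(\<lambda>k. L / real (Suc k)) \<longlonglongrightarrow> 0"
    using LIMSEQ_Suc[OF lim_const_over_n[of L]] by simp
  have "\<forall>\<^sub>F j in sequentially. ee j < e4" using ee_lim e4 by (rule order_tendstoD)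
  moreover have "\<forall>\<^sub>F j in sequentially. L / real (Suc j) < \<delta> / 2" using \<delta> by (intro order_tendstoD[OF l]) simp
  ultimately have "\<forall>\<^sub>F j in sequentially. ee j < e4 \<and> L / real (Suc j) < \<delta> / 2" by (rule eventually_conj)
  then obtain j where j1: "ee j < e4" and j2: "L / real (Suc j) < \<delta> / 2"
    unfolding eventually_sequentially by blast
  define N0 where "N0 = nat \<lceil>2 * L / \<delta>\<rceil> + 1"
  have N01: "N0 \<ge> 1" by (simp add: N0_def)
  have "\<forall>N\<ge>N0. \<forall>t\<in>{0<..<L}. nsq lborel (\<lambda>y. A N (idx L N t) y - V1 (y, t)) \<le> e \<and>
            nsq lborel (\<lambda>y. vs (tau L N (idx L N t)) y - vs t y) \<le> e"
  proof (intro allI impI ballI)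
    fix N t assume N: "N \<ge> N0" and t: "t \<in> {0<..<L}"
    have N1: "1 \<le> N" using N N01 by simp
    have LN: "L / real N < \<delta> / 2"
    proof -
      have "real N \<ge> 2 * L / \<delta> + 1" using N real_nat_ceiling_ge[of "2 * L / \<delta>"] unfolding N0_def by linarith
      hence gt: "real N > 2 * L / \<delta>" by simp
      have pos: "2 * L / \<delta> > 0" using \<delta> Lpos by simp
      have "L / real N < L / (2 * L / \<delta>)"
      proof (rule divide_strict_left_mono[OF gt Lpos])
        have "real N > 0" using N1 by simp
        thus "0 < real N * (2 * L / \<delta>)" using pos by (rule mult_pos_pos)
      qed
      also have "\<dots> = \<delta> / 2" using Lpos \<delta> by (simp add: field_simps)
      finally show ?thesis .
    qed
    note f = idx_facts[OF Lpos N1 t]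
    define n where "n = idx L N t"
    define \<tau> where "\<tau> = tau L N n"
    have \<tau>t: "\<bar>\<tau> - t\<bar> < \<delta> / 2" unfolding \<tau>_def n_def using f(2) f(3) LN by linarith
    have \<tau>L: "\<tau> \<in> {0..L}" unfolding \<tau>_def n_def by (rule decomp(4)[OF N1 f(1)])
    have tjt: "\<bar>tj j t - t\<bar> < \<delta> / 2" using tj_facts(2)[OF t, of j] Nj_small(2)[of j] j2 by linarith
    have t0: "t \<in> {0..L}" using t by simp
    have s1: "nsq lborel (\<lambda>y. A N n y - Sj j t y) \<le> e4"
    proof -
      have "nsq lborel (\<lambda>y. A N n y - Sj j t y) \<le> nsq lborel (\<lambda>y. vs \<tau> y - vs (tj j t) y)"
        unfolding Sj_def tj_def \<tau>_def n_def by (rule stab[OF N1 f(1) Nj_ge1 tj_facts(3)[OF t]])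
      also have "\<dots> \<le> e4" unfolding \<delta>_def[symmetric]
        by (rule df(2)[OF e4 \<tau>L tj_facts(1)[OF t]]) (use \<tau>t tjt \<delta>_def in linarith)
      finally show ?thesis .
    qed
    have aL: "L2M lborel (A N n)" unfolding n_def by (rule decomp(1)[OF N1 f(1)])
    have "nsq lborel (\<lambda>y. (A N n y - Sj j t y) + (Sj j t y - V1 (y, t)))
        \<le> 2 * nsq lborel (\<lambda>y. A N n y - Sj j t y) + 2 * nsq lborel (\<lambda>y. Sj j t y - V1 (y, t))"
      by (rule nsq_add_le[OF L2M_diff[OF aL Sj_L2[OF t]] V1_slice(3)[OF t]])
    also have "\<dots> \<le> 2 * e4 + 2 * e4" using s1 V1_slice(2)[OF t, of j] j1 by linarith
    finally have "nsq lborel (\<lambda>y. A N n y - V1 (y, t)) \<le> e" by (simp add: e4_def)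
    moreover have "nsq lborel (\<lambda>y. vs \<tau> y - vs t y) \<le> e4"
      unfolding \<delta>_def[symmetric] by (rule df(2)[OF e4 \<tau>L t0]) (use \<tau>t \<delta>_def in linarith)
    ultimately show "nsq lborel (\<lambda>y. A N (idx L N t) y - V1 (y, t)) \<le> e \<and>
            nsq lborel (\<lambda>y. vs (tau L N (idx L N t)) y - vs t y) \<le> e"
      using e unfolding \<tau>_def n_def e4_def by simp
  qed
  thus ?thesis using N01 by blast
qed

lemma conv1: "(\<lambda>N. L2_dist_sq (cyl \<Omega> L) (step_fun L N (v1n N)) V1) \<longlonglongrightarrow> 0"
proof (rule LIMSEQ_I)
  fix r :: real assume r: "r > 0"
  define e where "e = r / (2 * L)"
  have e: "e > 0" using r Lpos by (simp add: e_def)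
  obtain N0 where N01: "N0 \<ge> 1" and N0: "\<And>N t. N \<ge> N0 \<Longrightarrow> t \<in> {0<..<L} \<Longrightarrow>
      nsq lborel (\<lambda>y. A N (idx L N t) y - V1 (y, t)) \<le> e"
    using conv_slices[OF e] by blast
  have "norm (L2_dist_sq (cyl \<Omega> L) (step_fun L N (v1n N)) V1 - 0) < r" if N: "N \<ge> N0" for N
  proof -
    have N1: "1 \<le> N" using N N01 by simp
    define F where "F x = RS (cyl \<Omega> L) (step_fun L N (v1n N)) x - V1 x" for x
    have d: "L2_dist_sq (cyl \<Omega> L) (step_fun L N (v1n N)) V1 = nsq lborel F"
      unfolding L2_dist_sq_eq RS_V1 F_def ..
    have FL: "L2M lborel F" unfolding F_def[abs_def] by (rule L2M_diff[OF step_L2(1)[OF N1] V1_L2])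
    have "nsq lborel F \<le> e * L"
    proof (rule prod_nsq_le[OF FL _ _ less_imp_le[OF Lpos]])
      fix t y assume "t \<notin> {0<..<L}" thus "F (y, t) = 0"
        unfolding F_def using RS_step_slice(2)[OF N1] V1_out by simp
    next
      fix t assume t: "t \<in> {0<..<L}"
      have "(\<lambda>y. F (y, t)) = (\<lambda>y. A N (idx L N t) y - V1 (y, t))"
        unfolding F_def A_def using RS_step_slice(1)[OF N1 t] by auto
      thus "nsq lborel (\<lambda>y. F (y, t)) \<le> e" using N0[OF N t] by simp
    qed
    also have "\<dots> = r / 2" using Lpos by (simp add: e_def)
    finally show ?thesis using d nsq_nonneg[of lborel F] r by simp
  qed
  thus "\<exists>no. \<forall>N\<ge>no. norm (L2_dist_sq (cyl \<Omega> L) (step_fun L N (v1n N)) V1 - 0) < r" by blast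
qed

lemma conv2: "(\<lambda>N. L2_dist_sq (cyl \<Omega> L) (step_fun L N (v2n N)) V2) \<longlonglongrightarrow> 0"
proof (rule LIMSEQ_I)
  fix r :: real assume r: "r > 0"
  define e where "e = r / (8 * L)"
  have e: "e > 0" using r Lpos by (simp add: e_def)
  obtain N0 where N01: "N0 \<ge> 1" and N0: "\<And>N t. N \<ge> N0 \<Longrightarrow> t \<in> {0<..<L} \<Longrightarrow>
      nsq lborel (\<lambda>y. A N (idx L N t) y - V1 (y, t)) \<le> e \<and>
      nsq lborel (\<lambda>y. vs (tau L N (idx L N t)) y - vs t y) \<le> e"
    using conv_slices[OF e] by blast
  have "norm (L2_dist_sq (cyl \<Omega> L) (step_fun L N (v2n N)) V2 - 0) < r" if N: "N \<ge> N0" for N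
  proof -
    have N1: "1 \<le> N" using N N01 by simp
    define F where "F x = RS (cyl \<Omega> L) (step_fun L N (v2n N)) x - V2 x" for x
    have d: "L2_dist_sq (cyl \<Omega> L) (step_fun L N (v2n N)) V2 = nsq lborel F"
      unfolding L2_dist_sq_eq RS_V2 F_def ..
    have FL: "L2M lborel F" unfolding F_def[abs_def] by (rule L2M_diff[OF step_L2(2)[OF N1] V2_L2])
    have "nsq lborel F \<le> (4 * e) * L"
    proof (rule prod_nsq_le[OF FL _ _ less_imp_le[OF Lpos]])
      fix t y assume "t \<notin> {0<..<L}" thus "F (y, t) = 0"
        unfolding F_def V2_def using RS_step_slice(2)[OF N1] V1_out vD_slice(2) by simp
    next
      fix t assume t: "t \<in> {0<..<L}"
      note n = idx_facts(1)[OF Lpos N1 t]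
      define \<tau> where "\<tau> = tau L N (idx L N t)"
      have \<tau>L: "\<tau> \<in> {0..L}" unfolding \<tau>_def by (rule decomp(4)[OF N1 n])
      have t0: "t \<in> {0..L}" using t by simp
      have Fs: "(\<lambda>y. F (y, t)) = (\<lambda>y. B N (idx L N t) y - (vs t y - V1 (y, t)))"
        unfolding F_def B_def V2_def using RS_step_slice(1)[OF N1 t] vD_slice(1)[OF t] by auto
      have aL: "L2M lborel (A N (idx L N t))" by (rule decomp(1)[OF N1 n])
      have X: "L2M lborel (\<lambda>y. vs \<tau> y - vs t y)" by (rule L2M_diff[OF vs_L2(1)[OF \<tau>L] vs_L2(1)[OF t0]])
      have Y: "L2M lborel (\<lambda>y. A N (idx L N t) y - V1 (y, t))" by (rule L2M_diff[OF aL V1_slice(1)[OF t]])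
      have "nsq lborel (\<lambda>y. F (y, t)) = nsq lborel (\<lambda>y. (vs \<tau> y - vs t y) - (A N (idx L N t) y - V1 (y, t)))"
        unfolding Fs
      proof (rule nsq_cong_AE)
        show "(\<lambda>y. B N (idx L N t) y - (vs t y - V1 (y, t))) \<in> borel_measurable lborel"
          by (rule L2M_meas[OF L2M_diff[OF decomp(2)[OF N1 n] vD_slice_L2[OF t]]])
        show "(\<lambda>y. vs \<tau> y - vs t y - (A N (idx L N t) y - V1 (y, t))) \<in> borel_measurable lborel"
          by (rule L2M_meas[OF L2M_diff[OF X Y]])
        show "AE y in lborel. B N (idx L N t) y - (vs t y - V1 (y, t)) = vs \<tau> y - vs t y - (A N (idx L N t) y - V1 (y, t))"
          using decomp(3)[OF N1 n]
        proof (rule AE_mp, intro AE_I2 impI)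
          fix y assume "A N (idx L N t) y + B N (idx L N t) y = vs (tau L N (idx L N t)) y"
          thus "B N (idx L N t) y - (vs t y - V1 (y, t)) = vs \<tau> y - vs t y - (A N (idx L N t) y - V1 (y, t))"
            unfolding \<tau>_def by (simp add: algebra_simps)
        qed
      qed
      also have "\<dots> \<le> 2 * nsq lborel (\<lambda>y. vs \<tau> y - vs t y) + 2 * nsq lborel (\<lambda>y. A N (idx L N t) y - V1 (y, t))"
        by (rule nsq_diff_le[OF X Y])
      also have "\<dots> \<le> 2 * e + 2 * e" using N0[OF N t] unfolding \<tau>_def by linarith
      finally show "nsq lborel (\<lambda>y. F (y, t)) \<le> 4 * e" by simp
    qed
    also have "\<dots> = r / 2" using Lpos by (simp add: e_def)
    finally show ?thesis using d nsq_nonneg[of lborel F] r by simp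
  qed
  thus "\<exists>no. \<forall>N\<ge>no. norm (L2_dist_sq (cyl \<Omega> L) (step_fun L N (v2n N)) V2 - 0) < r" by blast
qed

end


theorem lemma4p2:
  fixes \<Omega> :: "(real^2) set" and L :: real
    and v :: "(real^2) \<times> real \<Rightarrow> real^2"
    and v1n v2n :: "nat \<Rightarrow> nat \<Rightarrow> real^2 \<Rightarrow> real^2"
  assumes dom: "smooth_bounded_domain \<Omega>" and sc: "simply_connected \<Omega>"
    and L: "L > 0"
    and vV: "v \<in> Vspace (cyl \<Omega> L)"
    and vsmooth: "smooth_on_closure (cyl \<Omega> L) v"
    and dec: "\<And>N n. 1 \<le> N \<Longrightarrow> n < N \<Longrightarrow>
        v1n N n \<in> Fspace \<Omega> \<and> v2n N n \<in> Gspace \<Omega> \<and>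
        (AE y in lborel. y \<in> \<Omega> \<longrightarrow> v1n N n y + v2n N n y = v (y, real n * (L / real N)))"
  shows "\<exists>v1 v2. L2 (cyl \<Omega> L) v1 \<and> L2 (cyl \<Omega> L) v2 \<and>
           (AE x in lborel. x \<in> cyl \<Omega> L \<longrightarrow> v1 x + v2 x = v x) \<and>
           (\<lambda>N. L2_dist_sq (cyl \<Omega> L) (step_fun L N (v1n N)) v1) \<longlonglongrightarrow> 0 \<and>
           (\<lambda>N. L2_dist_sq (cyl \<Omega> L) (step_fun L N (v2n N)) v2) \<longlonglongrightarrow> 0 \<and>
           L2_inner (cyl \<Omega> L) v1 v2 = 0 \<and>
           (\<forall>N\<ge>1. L2_inner (cyl \<Omega> L) (step_fun L N (v1n N)) v2 = 0 \<and>
                   L2_inner (cyl \<Omega> L) v1 (step_fun L N (v2n N)) = 0)"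
proof -
  have op: "open \<Omega>" and bd: "bounded \<Omega>" using dom unfolding smooth_bounded_domain_def by auto
  have clo: "closure (cyl \<Omega> L) = closure \<Omega> \<times> {0..L}"
    unfolding cyl_def closure_Times using L by simp
  obtain U w where U: "open U" "closure (cyl \<Omega> L) \<subseteq> U" and sw: "smooth_on U w"
    and wv: "\<And>x. x \<in> closure (cyl \<Omega> L) \<Longrightarrow> w x = v x"
    using vsmooth unfolding smooth_on_closure_def by blast
  have "continuous_on U w" using sw unfolding smooth_on_def using Ck_on.simps(1) by blast
  hence "continuous_on (closure (cyl \<Omega> L)) w" using U(2) by (rule continuous_on_subset)
  moreover have "continuous_on (closure (cyl \<Omega> L)) w = continuous_on (closure (cyl \<Omega> L)) v"
    by (rule continuous_on_cong[OF refl]) (rule wv)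
  ultimately have "continuous_on (closure (cyl \<Omega> L)) v" by simp
  hence vc: "continuous_on (closure \<Omega> \<times> {0..L}) v" unfolding clo .
  interpret M: msetup \<Omega> L v v1n v2n
    by (unfold_locales) (use op bd L vc dec in auto)
  show ?thesis
  proof (intro exI conjI allI impI)
    show "L2 (cyl \<Omega> L) M.V1" unfolding L2_iff M.RS_V1 by (rule M.V1_L2)
    show "L2 (cyl \<Omega> L) M.V2" unfolding L2_iff M.RS_V2 by (rule M.V2_L2)
    show "AE x in lborel. x \<in> cyl \<Omega> L \<longrightarrow> M.V1 x + M.V2 x = v x"
      by (intro AE_I2 impI) (simp add: M.V2_def M.vD_def)
    show "(\<lambda>N. L2_dist_sq (cyl \<Omega> L) (step_fun L N (v1n N)) M.V1) \<longlonglongrightarrow> 0" by (rule M.conv1)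
    show "(\<lambda>N. L2_dist_sq (cyl \<Omega> L) (step_fun L N (v2n N)) M.V2) \<longlonglongrightarrow> 0" by (rule M.conv2)
    show "L2_inner (cyl \<Omega> L) M.V1 M.V2 = 0" unfolding L2_inner_eq M.RS_V1 M.RS_V2 by (rule M.inner_V1_V2)
    fix N :: nat assume N: "1 \<le> N"
    show "L2_inner (cyl \<Omega> L) (step_fun L N (v1n N)) M.V2 = 0"
      unfolding L2_inner_eq M.RS_V2 by (rule M.inner_step1_V2[OF N])
    show "L2_inner (cyl \<Omega> L) M.V1 (step_fun L N (v2n N)) = 0"
      unfolding L2_inner_eq M.RS_V1 by (rule M.inner_V1_step2[OF N])
  qed
qed


end
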